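(* Let $\Lambda>1$. There is a coefficient $a\in C^\infty(\mathbb{T}^2;[1,\Lambda])$ and a constant $F_a>0$ such that for each $F\in(-F_a,F_a)$ and each uniformly continuous $u_0:\mathbb{R}^2\to\mathbb{R}$, if $(u^\varepsilon)_{\varepsilon>0}$ are the viscosity solutions of $$u^\varepsilon_t=a(\tfrac{x}{\varepsilon})\,\mathrm{tr}\big((\mathrm{Id}-\widehat{Du^\varepsilon}\otimes\widehat{Du^\varepsilon})D^2u^\varepsilon\big)+\tfrac1\varepsilon Da(\tfrac{x}{\varepsilon})\cdot Du^\varepsilon+\tfrac1\varepsilon F\|Du^\varepsilon\| \ \text{ in }\mathbb{R}^2\times(0,\infty),\qquad u^\varepsilon=u_0\ \text{ on }\mathbb{R}^2\times\{0\},$$ then $u^\varepsilon\to u_0$ locally uniformly in $\mathbb{R}^2\times[0,\infty)$ as $\varepsilon\to0^+$.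
   Context: $\widehat{p}=p/|p|$; $\mathbb{T}^2=\mathbb{R}^2/\mathbb{Z}^2$ and functions on it are identified with $\mathbb{Z}^2$-periodic functions on $\mathbb{R}^2$. Viscosity solutions of the geometric equation are understood in the standard sense. *)

theory Defs
  imports "HOL-Analysis.Analysis"
begin

definition has_partial :: "(real^2 \<Rightarrow> real) \<Rightarrow> 2 \<Rightarrow> real \<Rightarrow> real^2 \<Rightarrow> bool" where
  "has_partial f i d x \<longleftrightarrow> ((\<lambda>s. f (x + s *\<^sub>R axis i 1)) has_real_derivative d) (at 0)"

text \<open>C-infinity functions on R^2: continuous, and all first partials exist
  everywhere and are again C-infinity (coinductively).\<close>
coinductive smooth2 :: "(real^2 \<Rightarrow> real) \<Rightarrow> bool" where
  "continuous_on UNIV f \<Longrightarrow>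
   (\<forall>i. \<exists>g. (\<forall>x. has_partial f i (g x) x) \<and> smooth2 g) \<Longrightarrow> smooth2 f"

definition grad :: "(real^2 \<Rightarrow> real) \<Rightarrow> real^2 \<Rightarrow> real^2" where
  "grad f x = (\<chi> i. deriv (\<lambda>s. f (x + s *\<^sub>R axis i 1)) 0)"

text \<open>Z^2-periodic functions, i.e. functions on the torus T^2.\<close>
definition periodic2 :: "(real^2 \<Rightarrow> real) \<Rightarrow> bool" where
  "periodic2 f \<longleftrightarrow> (\<forall>x k. (\<forall>i. k $ i \<in> \<int>) \<longrightarrow> f (x + k) = f x)"

text \<open>tr((Id - q (x) q) X).\<close>
definition mc_term :: "real^2^2 \<Rightarrow> real^2 \<Rightarrow> real" where
  "mc_term X q = trace X - q \<bullet> (X *v q)"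

text \<open>Right-hand side H(x,p,X) of u_t = H(x,Du,D^2u) for
  u_t = a(x/e) tr((Id - p^ (x) p^) X) + (1/e) Da(x/e).p + (1/e) F |p|,
  and its upper / lower semicontinuous envelopes (they differ only at p = 0).\<close>
definition H_upper :: "(real^2 \<Rightarrow> real) \<Rightarrow> real \<Rightarrow> real \<Rightarrow> real^2 \<Rightarrow> real^2 \<Rightarrow> real^2^2 \<Rightarrow> real" where
  "H_upper a e F x p X =
     (if p \<noteq> 0 then
        a ((1/e) *\<^sub>R x) * mc_term X ((1 / norm p) *\<^sub>R p)
        + (1/e) * (grad a ((1/e) *\<^sub>R x) \<bullet> p) + (1/e) * F * norm p
      else a ((1/e) *\<^sub>R x) * (SUP q\<in>sphere 0 1. mc_term X q))"

definition H_lower :: "(real^2 \<Rightarrow> real) \<Rightarrow> real \<Rightarrow> real \<Rightarrow> real^2 \<Rightarrow> real^2 \<Rightarrow> real^2^2 \<Rightarrow> real" where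
  "H_lower a e F x p X =
     (if p \<noteq> 0 then
        a ((1/e) *\<^sub>R x) * mc_term X ((1 / norm p) *\<^sub>R p)
        + (1/e) * (grad a ((1/e) *\<^sub>R x) \<bullet> p) + (1/e) * F * norm p
      else a ((1/e) *\<^sub>R x) * (INF q\<in>sphere 0 1. mc_term X q))"

text \<open>Test functions phi(x,t) of class C^{2,1}, with time derivative pt,
  spatial gradient Dp and spatial Hessian D2p.\<close>
definition test_fn :: "(real^2 \<Rightarrow> real \<Rightarrow> real) \<Rightarrow> (real^2 \<Rightarrow> real \<Rightarrow> real)
    \<Rightarrow> (real^2 \<Rightarrow> real \<Rightarrow> real^2) \<Rightarrow> (real^2 \<Rightarrow> real \<Rightarrow> real^2^2) \<Rightarrow> bool" where
  "test_fn phi pt Dp D2p \<longleftrightarrow>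
     (\<forall>x t. ((\<lambda>z. phi (fst z) (snd z)) has_derivative
              (\<lambda>h. Dp x t \<bullet> fst h + pt x t * snd h)) (at (x, t)))
   \<and> (\<forall>x t. ((\<lambda>y. Dp y t) has_derivative (\<lambda>h. D2p x t *v h)) (at x))
   \<and> continuous_on UNIV (\<lambda>z. pt (fst z) (snd z))
   \<and> continuous_on UNIV (\<lambda>z. Dp (fst z) (snd z))
   \<and> continuous_on UNIV (\<lambda>z. D2p (fst z) (snd z))"

definition loc_max_at :: "(real^2 \<Rightarrow> real \<Rightarrow> real) \<Rightarrow> real^2 \<Rightarrow> real \<Rightarrow> bool" where
  "loc_max_at w x t \<longleftrightarrow> (\<exists>r>0. \<forall>y s. s > 0 \<and> dist y x < r \<and> \<bar>s - t\<bar> < r \<longrightarrow> w y s \<le> w x t)"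

definition loc_min_at :: "(real^2 \<Rightarrow> real \<Rightarrow> real) \<Rightarrow> real^2 \<Rightarrow> real \<Rightarrow> bool" where
  "loc_min_at w x t \<longleftrightarrow> (\<exists>r>0. \<forall>y s. s > 0 \<and> dist y x < r \<and> \<bar>s - t\<bar> < r \<longrightarrow> w y s \<ge> w x t)"

definition visc_sub :: "(real^2 \<Rightarrow> real) \<Rightarrow> real \<Rightarrow> real \<Rightarrow> (real^2 \<Rightarrow> real \<Rightarrow> real) \<Rightarrow> bool" where
  "visc_sub a e F u \<longleftrightarrow>
     (\<forall>phi pt Dp D2p x t. test_fn phi pt Dp D2p \<and> t > 0
        \<and> loc_max_at (\<lambda>y s. u y s - phi y s) x t
        \<longrightarrow> pt x t \<le> H_upper a e F x (Dp x t) (D2p x t))"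

definition visc_super :: "(real^2 \<Rightarrow> real) \<Rightarrow> real \<Rightarrow> real \<Rightarrow> (real^2 \<Rightarrow> real \<Rightarrow> real) \<Rightarrow> bool" where
  "visc_super a e F u \<longleftrightarrow>
     (\<forall>phi pt Dp D2p x t. test_fn phi pt Dp D2p \<and> t > 0
        \<and> loc_min_at (\<lambda>y s. u y s - phi y s) x t
        \<longrightarrow> pt x t \<ge> H_lower a e F x (Dp x t) (D2p x t))"

text \<open>u is the viscosity solution of the Cauchy problem with initial datum u0:
  continuous on R^2 x [0,oo), u(.,0) = u0, sub- and supersolution, and in the
  standard uniqueness class of functions with at most linear growth in x,
  locally uniformly in t.\<close>
definition visc_solution :: "(real^2 \<Rightarrow> real) \<Rightarrow> real \<Rightarrow> real \<Rightarrow> (real^2 \<Rightarrow> real)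
    \<Rightarrow> (real^2 \<Rightarrow> real \<Rightarrow> real) \<Rightarrow> bool" where
  "visc_solution a e F u0 u \<longleftrightarrow>
     continuous_on (UNIV \<times> {0..}) (\<lambda>z. u (fst z) (snd z))
   \<and> (\<forall>x. u x 0 = u0 x)
   \<and> (\<forall>T>0. \<exists>C. \<forall>x t. 0 \<le> t \<and> t \<le> T \<longrightarrow> \<bar>u x t\<bar> \<le> C * (1 + norm x))
   \<and> visc_sub a e F u \<and> visc_super a e F u"

definition loc_unif_conv :: "(real \<Rightarrow> real^2 \<Rightarrow> real \<Rightarrow> real) \<Rightarrow> (real^2 \<Rightarrow> real) \<Rightarrow> bool" where
  "loc_unif_conv u u0 \<longleftrightarrow>
     (\<forall>K. compact K \<and> K \<subseteq> UNIV \<times> {0..} \<longrightarrow>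
        (\<forall>\<delta>>0. \<exists>e0>0. \<forall>e. 0 < e \<and> e < e0 \<longrightarrow>
           (\<forall>z\<in>K. \<bar>u e (fst z) (snd z) - u0 (fst z)\<bar> < \<delta>)))"

end

theory Submission
  imports Defs
begin


definition FF :: "real \<Rightarrow> real" where "FF u = u*u - (1/2)*(u*u*u)"
definition FFd :: "real \<Rightarrow> real" where "FFd u = 2*u - (3/2)*(u*u)"
definition AA :: "real \<Rightarrow> real \<Rightarrow> real" where "AA K t = exp (- exp (K * (t - 5/4)))"
definition AAd :: "real \<Rightarrow> real \<Rightarrow> real" where "AAd K t = - K * exp (K * (t - 5/4)) * AA K t"

definition aa :: "real \<Rightarrow> real \<Rightarrow> real^2 \<Rightarrow> real" where
"aa c K w = 1 + c * (AA K (FF (cos(pi*w$1)) + FF (cos(pi*w$2))) + AA K (FF (- cos(pi*w$1)) + FF (cos(pi*w$2)))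
   + AA K (FF (cos(pi*w$1)) + FF (- cos(pi*w$2))) + AA K (FF (- cos(pi*w$1)) + FF (- cos(pi*w$2))))"

inductive_set TT :: "(real^2 \<Rightarrow> real) set" where
  cst: "(\<lambda>y. k) \<in> TT"
| cs: "(\<lambda>y. cos (pi * y$j)) \<in> TT"
| sn: "(\<lambda>y. sin (pi * y$j)) \<in> TT"
| ad: "f \<in> TT \<Longrightarrow> g \<in> TT \<Longrightarrow> (\<lambda>y. f y + g y) \<in> TT"
| df: "f \<in> TT \<Longrightarrow> g \<in> TT \<Longrightarrow> (\<lambda>y. f y - g y) \<in> TT"
| ml: "f \<in> TT \<Longrightarrow> g \<in> TT \<Longrightarrow> (\<lambda>y. f y * g y) \<in> TT"
| ng: "f \<in> TT \<Longrightarrow> (\<lambda>y. - f y) \<in> TT"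
| ex: "f \<in> TT \<Longrightarrow> (\<lambda>y. exp (f y)) \<in> TT"

lemma TT_cont: "f \<in> TT \<Longrightarrow> continuous_on UNIV f"
  by (induction rule: TT.induct) (auto intro!: continuous_intros)

lemma axis_comp: "(x + s *\<^sub>R axis i 1) $ j = x$j + s * (if j = i then 1 else 0)"
  by (simp add: axis_def)

lemma TT_partial: "f \<in> TT \<Longrightarrow> \<exists>g\<in>TT. \<forall>x. has_partial f i (g x) x"
proof (induction rule: TT.induct)
  case (cst k)
  show ?case by (rule bexI[of _ "\<lambda>y. 0"]) (auto simp: has_partial_def intro: TT.cst)
next
  case (cs j)
  show ?case
    apply (rule bexI[of _ "\<lambda>y. (- (pi * (if j = i then 1 else 0))) * sin (pi * y$j)"])
    apply (auto simp: has_partial_def axis_comp axis_def intro!: derivative_eq_intros TT.intros)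
    done
next
  case (sn j)
  show ?case
    apply (rule bexI[of _ "\<lambda>y. (pi * (if j = i then 1 else 0)) * cos (pi * y$j)"])
    apply (auto simp: has_partial_def axis_comp axis_def intro!: derivative_eq_intros TT.intros)
    done
next
  case (ad f g)
  then obtain f' g' where "f' \<in> TT" "g' \<in> TT" "\<forall>x. has_partial f i (f' x) x" "\<forall>x. has_partial g i (g' x) x" by blast
  then show ?case
    by (intro bexI[of _ "\<lambda>y. f' y + g' y"]) (auto simp: has_partial_def intro!: derivative_eq_intros TT.intros)
next
  case (df f g)
  then obtain f' g' where "f' \<in> TT" "g' \<in> TT" "\<forall>x. has_partial f i (f' x) x" "\<forall>x. has_partial g i (g' x) x" by blast
  then show ?case
    by (intro bexI[of _ "\<lambda>y. f' y - g' y"]) (auto simp: has_partial_def intro!: derivative_eq_intros TT.intros)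
next
  case (ml f g)
  then obtain f' g' where "f' \<in> TT" "g' \<in> TT" "\<forall>x. has_partial f i (f' x) x" "\<forall>x. has_partial g i (g' x) x" by blast
  then show ?case
    using ml.hyps by (intro bexI[of _ "\<lambda>y. f' y * g y + f y * g' y"]) (auto simp: has_partial_def intro!: derivative_eq_intros TT.intros)
next
  case (ng f)
  then obtain f' where "f' \<in> TT" "\<forall>x. has_partial f i (f' x) x" by blast
  then show ?case
    by (intro bexI[of _ "\<lambda>y. - f' y"]) (auto simp: has_partial_def intro!: derivative_eq_intros TT.intros)
next
  case (ex f)
  then obtain f' where "f' \<in> TT" "\<forall>x. has_partial f i (f' x) x" by blast
  then show ?case
    using ex.hyps by (intro bexI[of _ "\<lambda>y. exp (f y) * f' y"]) (auto simp: has_partial_def intro!: derivative_eq_intros TT.intros)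
qed

lemma TT_smooth: "f \<in> TT \<Longrightarrow> smooth2 f"
proof (coinduction arbitrary: f rule: smooth2.coinduct)
  case (smooth2 f)
  then show ?case using TT_cont TT_partial by blast
qed

lemma aa_TT: "aa c K \<in> TT"
  unfolding aa_def[abs_def] AA_def FF_def
  by (intro TT.intros)



lemma cos_shift_int: assumes "r \<in> \<int>" shows "cos (pi * (t + r)) = cos (pi * t) \<or> cos (pi * (t + r)) = - cos (pi * t)"
proof -
  have s: "sin (pi * r) = 0" using assms sin_times_pi_eq_0[of r] by (simp add: mult.commute)
  then have "cos (pi * r)^2 = 1" using sin_cos_squared_add[of "pi*r"] by simp
  then have c: "cos (pi * r) = 1 \<or> cos (pi * r) = -1" by (simp add: power2_eq_1_iff)
  have "cos (pi * (t + r)) = cos (pi*t) * cos (pi*r) - sin (pi*t) * sin (pi*r)"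
    by (simp add: distrib_left cos_add)
  then show ?thesis using s c by auto
qed

definition GG :: "real \<Rightarrow> real \<Rightarrow> real \<Rightarrow> real \<Rightarrow> real" where
 "GG c K a b = 1 + c * (AA K (FF a + FF b) + AA K (FF (- a) + FF b) + AA K (FF a + FF (- b)) + AA K (FF (- a) + FF (- b)))"

lemma aa_GG: "aa c K w = GG c K (cos (pi * w$1)) (cos (pi * w$2))"
  by (simp add: aa_def GG_def)

lemma GG_sym1: "GG c K (- a) b = GG c K a b" by (simp add: GG_def algebra_simps)
lemma GG_sym2: "GG c K a (- b) = GG c K a b" by (simp add: GG_def algebra_simps)

lemma aa_periodic: "periodic2 (aa c K)"
  unfolding periodic2_def
proof (intro allI impI)
  fix x k :: "real^2" assume k: "\<forall>i. k $ i \<in> \<int>"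
  have 1: "cos (pi * (x + k)$1) = cos (pi * x$1) \<or> cos (pi * (x + k)$1) = - cos (pi * x$1)"
    using cos_shift_int[OF k[rule_format, of 1]] by simp
  have 2: "cos (pi * (x + k)$2) = cos (pi * x$2) \<or> cos (pi * (x + k)$2) = - cos (pi * x$2)"
    using cos_shift_int[OF k[rule_format, of 2]] by simp
  show "aa c K (x + k) = aa c K x"
    unfolding aa_GG using 1 2 GG_sym1 GG_sym2 by metis
qed

lemma AA_pos: "0 < AA K t" and AA_le1: "AA K t \<le> 1"
  by (auto simp: AA_def)

lemma aa_range: assumes "c \<ge> 0" shows "1 \<le> aa c K w" "aa c K w \<le> 1 + 4 * c"
proof -
  define S where "S = AA K (FF (cos(pi*w$1)) + FF (cos(pi*w$2))) + AA K (FF (- cos(pi*w$1)) + FF (cos(pi*w$2)))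
   + AA K (FF (cos(pi*w$1)) + FF (- cos(pi*w$2))) + AA K (FF (- cos(pi*w$1)) + FF (- cos(pi*w$2)))"
  have a: "aa c K w = 1 + c * S" by (simp add: aa_def S_def)
  have "0 \<le> S" unfolding S_def by (intro add_nonneg_nonneg less_imp_le AA_pos)
  moreover have "S \<le> 4" unfolding S_def using AA_le1
    by (smt (verit))
  ultimately show "1 \<le> aa c K w" "aa c K w \<le> 1 + 4 * c"
    unfolding a using assms mult_left_mono[of S 4 c] by (auto intro: mult_nonneg_nonneg)
qed

lemma FF_deriv[derivative_intros]:
  "(f has_real_derivative f') (at x within S) \<Longrightarrow> ((\<lambda>x. FF (f x)) has_real_derivative FFd (f x) * f') (at x within S)"
  unfolding FF_def FFd_def
  by (auto intro!: derivative_eq_intros simp: algebra_simps)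

lemma AA_deriv[derivative_intros]:
  "(f has_real_derivative f') (at x within S) \<Longrightarrow> ((\<lambda>x. AA K (f x)) has_real_derivative AAd K (f x) * f') (at x within S)"
  unfolding AA_def AAd_def
  by (auto intro!: derivative_eq_intros simp: algebra_simps)

definition Bs :: "real \<Rightarrow> real \<Rightarrow> real^2 \<Rightarrow> real" where
  "Bs s1 s2 w = FF (s1 * cos (pi * w$1)) + FF (s2 * cos (pi * w$2))"

definition dBs :: "real \<Rightarrow> real \<Rightarrow> real^2 \<Rightarrow> 2 \<Rightarrow> real" where
  "dBs s1 s2 w i = (if i = 1 then s1 * FFd (s1 * cos (pi * w$1)) * (- pi * sin (pi * w$1))
                    else s2 * FFd (s2 * cos (pi * w$2)) * (- pi * sin (pi * w$2)))"

lemma two_cases: "(i::2) = 1 \<or> i = 2" using exhaust_2 by blast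

lemma Bs_deriv: "((\<lambda>s. Bs s1 s2 (w + s *\<^sub>R axis i 1)) has_real_derivative dBs s1 s2 w i) (at 0)"
proof -
  have e: "(1::2) \<noteq> 2" by simp
  show ?thesis
  using two_cases[of i]
  proof
    assume i: "i = 1"
    show ?thesis unfolding Bs_def dBs_def i
      by (auto simp: axis_def e intro!: derivative_eq_intros)
  next
    assume i: "i = 2"
    show ?thesis unfolding Bs_def dBs_def i
      by (auto simp: axis_def e intro!: derivative_eq_intros)
  qed
qed

lemma aa_Bs: "aa c K w = 1 + c * (AA K (Bs 1 1 w) + AA K (Bs (-1) 1 w) + AA K (Bs 1 (-1) w) + AA K (Bs (-1) (-1) w))"
  by (simp add: aa_def Bs_def)

definition gradaa :: "real \<Rightarrow> real \<Rightarrow> real^2 \<Rightarrow> 2 \<Rightarrow> real" where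
  "gradaa c K w i = c * (AAd K (Bs 1 1 w) * dBs 1 1 w i + AAd K (Bs (-1) 1 w) * dBs (-1) 1 w i
     + AAd K (Bs 1 (-1) w) * dBs 1 (-1) w i + AAd K (Bs (-1) (-1) w) * dBs (-1) (-1) w i)"

lemma aa_axis_deriv: "((\<lambda>s. aa c K (w + s *\<^sub>R axis i 1)) has_real_derivative gradaa c K w i) (at 0)"
proof -
  have d: "((\<lambda>s. AA K (Bs s1 s2 (w + s *\<^sub>R axis i 1))) has_real_derivative AAd K (Bs s1 s2 w) * dBs s1 s2 w i) (at 0)" for s1 s2
    using AA_deriv[OF Bs_deriv[of s1 s2 w i]] by simp
  show ?thesis
    unfolding aa_Bs gradaa_def
    using DERIV_add[OF DERIV_const[of 1] DERIV_cmult[OF DERIV_add[OF DERIV_add[OF DERIV_add[OF d[of 1 1] d[of "-1" 1]] d[of 1 "-1"]] d[of "-1" "-1"]], of c]]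
    by simp
qed

lemma grad_aa: "grad (aa c K) w $ i = gradaa c K w i"
  unfolding grad_def using DERIV_imp_deriv[OF aa_axis_deriv] by simp



definition DBv :: "real^2 \<Rightarrow> real^2" where "DBv w = (\<chi> i. dBs 1 1 w i)"

lemma norm2_eq: "norm (v::real^2) = sqrt ((v$1)^2 + (v$2)^2)"
  by (simp add: norm_vec_def L2_set_def sum_2)

lemma inner2_eq: "(v::real^2) \<bullet> u = v$1 * u$1 + v$2 * u$2"
  by (simp add: inner_vec_def sum_2)

lemma sign_prod: assumes "\<bar>u\<bar> \<le> 1" "s = 1 \<or> s = -1" shows "0 \<le> s * FFd (s * u) * FFd u"
proof -
  have uu: "u*u \<le> 1" using assms(1) by (metis abs_le_square_iff abs_mult_self_eq power2_eq_square abs_one one_power2)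
  show ?thesis using assms(2)
  proof
    assume "s = 1" then show ?thesis by simp
  next
    assume s: "s = -1"
    have "s * FFd (s * u) * FFd u = (u*u) * (4 - 9/4 * (u*u))" unfolding s FFd_def by (simp add: algebra_simps)
    moreover have "0 \<le> (u*u) * (4 - 9/4 * (u*u))"
    proof -
      have a: "0 \<le> u*u" by simp
      have b: "0 \<le> 4 - 9/4 * (u*u)" using uu by linarith
      show ?thesis using mult_nonneg_nonneg[OF a b] .
    qed
    ultimately show ?thesis by simp
  qed
qed

lemma dBs_prod: assumes "s1 = 1 \<or> s1 = -1" "s2 = 1 \<or> s2 = -1"
  shows "0 \<le> dBs s1 s2 w i * dBs 1 1 w i"
proof -
  have c1: "\<bar>cos (pi * w$1)\<bar> \<le> 1" and c2: "\<bar>cos (pi * w$2)\<bar> \<le> 1" by auto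
  have "0 \<le> (s1 * FFd (s1 * cos (pi * w$1)) * FFd (cos (pi * w$1))) * (pi * sin (pi * w$1))^2"
    using sign_prod[OF c1 assms(1)] by simp
  moreover have "0 \<le> (s2 * FFd (s2 * cos (pi * w$2)) * FFd (cos (pi * w$2))) * (pi * sin (pi * w$2))^2"
    using sign_prod[OF c2 assms(2)] by simp
  ultimately show ?thesis
    by (auto simp: dBs_def power2_eq_square algebra_simps)
qed

lemma exp3: "exp (3::real) \<le> 27"
proof -
  have "exp (3::real) = exp 1 ^ 3" using exp_of_nat_mult[of 3 "1::real"] by simp
  also have "\<dots> \<le> 3^3" using exp_le by (intro power_mono) auto
  finally show ?thesis by simp
qed

lemma AAd_bound: assumes "K > 0" "\<bar>t - 5/4\<bar> \<le> 1/K" shows "AAd K t \<le> - K / 81"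
proof -
  define x where "x = K * (t - 5/4)"
  have x: "\<bar>x\<bar> \<le> 1"
  proof -
    have "\<bar>x\<bar> = K * \<bar>t - 5/4\<bar>" unfolding x_def using assms(1) by (simp add: abs_mult)
    also have "\<dots> \<le> K * (1/K)" using assms by (intro mult_left_mono) auto
    finally show ?thesis using assms(1) by simp
  qed
  have e1: "exp x \<ge> 1/3"
  proof -
    have "exp (-1) \<le> exp x" using x by simp
    moreover have "exp (-1::real) = 1 / exp 1" by (simp add: exp_minus field_simps)
    moreover have "1/3 \<le> 1 / exp (1::real)" using exp_le by (simp add: field_simps)
    ultimately show ?thesis by linarith
  qed
  have e2: "exp (- exp x) \<ge> 1/27"
  proof -
    have "exp x \<le> exp 1" using x by simp
    also have "\<dots> \<le> 3" by (rule exp_le)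
    finally have "exp (-3) \<le> exp (- exp x)" by simp
    moreover have "exp (-3::real) = 1 / exp 3" by (simp add: exp_minus field_simps)
    moreover have "1/27 \<le> 1 / exp (3::real)" using exp3 by (simp add: field_simps)
    ultimately show ?thesis by linarith
  qed
  have "1/81 \<le> exp x * exp (- exp x)" using mult_mono[OF e1 e2] by simp
  then have "K * (1/81) \<le> K * (exp x * exp (- exp x))" using assms(1) by (intro mult_left_mono) auto
  then show ?thesis unfolding AAd_def AA_def x_def[symmetric] by (simp add: algebra_simps)
qed

lemma AAd_nonpos: "K \<ge> 0 \<Longrightarrow> AAd K t \<le> 0"
  by (simp add: AAd_def AA_def)

lemma grad_dot: "grad (aa c K) w \<bullet> DBv w = gradaa c K w 1 * dBs 1 1 w 1 + gradaa c K w 2 * dBs 1 1 w 2"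
  by (simp add: inner2_eq grad_aa DBv_def)

lemma key_ineq:
  assumes c: "c > 0" and K: "K > 0" and F: "\<bar>F\<bar> < 1" and d0: "d0 > 0"
    and Kc: "100 * (1 + 4*c) / d0^2 + 1 / d0 \<le> c * K / 81"
    and band: "\<bar>Bs 1 1 w - 5/4\<bar> \<le> 1/K" and dn: "d0 \<le> norm (DBv w)"
  shows "100 * (1 + 4*c) + grad (aa c K) w \<bullet> DBv w + \<bar>F\<bar> * norm (DBv w) \<le> 0"
proof -
  define N where "N = norm (DBv w)"
  have N2: "N^2 = (dBs 1 1 w 1)^2 + (dBs 1 1 w 2)^2"
    unfolding N_def norm2_eq DBv_def by simp
  define P where "P s1 s2 = dBs s1 s2 w 1 * dBs 1 1 w 1 + dBs s1 s2 w 2 * dBs 1 1 w 2" for s1 s2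
  have P: "0 \<le> P s1 s2" if "s1 = 1 \<or> s1 = -1" "s2 = 1 \<or> s2 = -1" for s1 s2
    unfolding P_def using dBs_prod[OF that] by (simp add: add_nonneg_nonneg)
  have gd: "grad (aa c K) w \<bullet> DBv w = c * (AAd K (Bs 1 1 w) * N^2 + AAd K (Bs (-1) 1 w) * P (-1) 1
        + AAd K (Bs 1 (-1) w) * P 1 (-1) + AAd K (Bs (-1) (-1) w) * P (-1) (-1))"
    unfolding grad_dot N2 P_def gradaa_def by (simp add: algebra_simps power2_eq_square)
  have t1: "AAd K (Bs (-1) 1 w) * P (-1) 1 \<le> 0" using AAd_nonpos[of K] K P[of "-1" 1]
    by (simp add: mult_nonpos_nonneg)
  have t2: "AAd K (Bs 1 (-1) w) * P 1 (-1) \<le> 0" using AAd_nonpos[of K] K P[of 1 "-1"]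
    by (simp add: mult_nonpos_nonneg)
  have t3: "AAd K (Bs (-1) (-1) w) * P (-1) (-1) \<le> 0" using AAd_nonpos[of K] K P[of "-1" "-1"]
    by (simp add: mult_nonpos_nonneg)
  have t0: "AAd K (Bs 1 1 w) * N^2 \<le> - K / 81 * N^2"
    using AAd_bound[OF K band] by (intro mult_right_mono) auto
  have g: "grad (aa c K) w \<bullet> DBv w \<le> - (c * K / 81 * N^2)"
  proof -
    have "grad (aa c K) w \<bullet> DBv w \<le> c * (- K / 81 * N^2)"
      unfolding gd using t0 t1 t2 t3 c by (intro mult_left_mono) auto
    then show ?thesis by simp
  qed
  have Nd: "d0 \<le> N" using dn N_def by simp
  have N0: "N > 0" using Nd d0 by simp
  have a1: "100 * (1 + 4*c) \<le> 100 * (1 + 4*c) / d0^2 * N^2"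
  proof -
    have "d0^2 \<le> N^2" using Nd d0 by (intro power_mono) auto
    then have "1 \<le> N^2 / d0^2" using d0 by (simp add: field_simps)
    then have "100 * (1 + 4*c) * 1 \<le> 100 * (1 + 4*c) * (N^2 / d0^2)" using c by (intro mult_left_mono) auto
    then show ?thesis by simp
  qed
  have a2: "\<bar>F\<bar> * N \<le> 1 / d0 * N^2"
  proof -
    have "\<bar>F\<bar> * N \<le> N" using F N0 by (simp add: mult_left_le_one_le less_imp_le)
    also have "N = N * 1" by simp
    also have "\<dots> \<le> N * (N / d0)" using Nd d0 N0 by (intro mult_left_mono) (auto simp: field_simps)
    finally show ?thesis by (simp add: power2_eq_square)
  qed
  have "100 * (1 + 4*c) + \<bar>F\<bar> * N \<le> (100 * (1 + 4*c) / d0^2 + 1 / d0) * N^2"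
    using a1 a2 by (simp add: algebra_simps)
  also have "\<dots> \<le> c * K / 81 * N^2" using Kc by (intro mult_right_mono) auto
  finally show ?thesis using g unfolding N_def[symmetric] by linarith
qed

definition phi2 :: "real \<times> real \<Rightarrow> real" where
  "phi2 z = (1 - (fst z)^2) * (FFd (fst z))^2 + (1 - (snd z)^2) * (FFd (snd z))^2"

lemma FF_vals: assumes "\<bar>u\<bar> \<le> 1" "(1 - u^2) * (FFd u)^2 = 0" shows "FF u = 0 \<or> FF u = 1/2 \<or> FF u = 3/2"
proof -
  have "1 - u^2 = 0 \<or> FFd u = 0" using assms(2) by simp
  then have "u = 1 \<or> u = -1 \<or> u = 0 \<or> u = 4/3"
  proof
    assume "1 - u^2 = 0" then show ?thesis by (auto simp: power2_eq_1_iff algebra_simps)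
  next
    assume "FFd u = 0" then have "u * (2 - 3/2 * u) = 0" by (simp add: FFd_def algebra_simps)
    then show ?thesis by auto
  qed
  then show ?thesis using assms(1) by (auto simp: FF_def)
qed

lemma d0_exists: "\<exists>d0>0. \<forall>w. 9/8 \<le> Bs 1 1 w \<longrightarrow> Bs 1 1 w \<le> 11/8 \<longrightarrow> d0 \<le> norm (DBv w)"
proof -
  define S where "S = ({-1..1} \<times> {-1..1}) \<inter> {z::real\<times>real. 9/8 \<le> FF (fst z) + FF (snd z)} \<inter> {z. FF (fst z) + FF (snd z) \<le> 11/8}"
  have contFF: "continuous_on UNIV (\<lambda>z::real\<times>real. FF (fst z) + FF (snd z))"
    unfolding FF_def by (intro continuous_intros)
  have cS: "compact S"
  proof -
    have "compact ({-1..1::real} \<times> {-1..(1::real)})" by (simp add: compact_Times)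
    moreover have "closed {z::real\<times>real. 9/8 \<le> FF (fst z) + FF (snd z)}"
      by (rule closed_Collect_le[OF continuous_on_const contFF])
    moreover have "closed {z::real\<times>real. FF (fst z) + FF (snd z) \<le> 11/8}"
      by (rule closed_Collect_le[OF contFF continuous_on_const])
    ultimately show ?thesis unfolding S_def by (intro compact_Int_closed)
  qed
  have mem: "(cos (pi * w$1), cos (pi * w$2)) \<in> S" if "9/8 \<le> Bs 1 1 w" "Bs 1 1 w \<le> 11/8" for w
    using that cos_ge_minus_one cos_le_one by (simp add: S_def Bs_def)
  have nw: "norm (DBv w) = sqrt (pi^2 * phi2 (cos (pi * w$1), cos (pi * w$2)))" for w
  proof -
    have s1: "sin (pi * w$1)^2 = 1 - cos (pi * w$1)^2" and s2: "sin (pi * w$2)^2 = 1 - cos (pi * w$2)^2"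
      by (simp_all add: sin_squared_eq)
    have "(dBs 1 1 w 1)^2 + (dBs 1 1 w 2)^2 = pi^2 * (sin (pi * w$1)^2 * (FFd (cos (pi * w$1)))^2 + sin (pi * w$2)^2 * (FFd (cos (pi * w$2)))^2)"
      unfolding dBs_def by (simp add: power_mult_distrib algebra_simps)
    also have "\<dots> = pi^2 * phi2 (cos (pi * w$1), cos (pi * w$2))"
      unfolding s1 s2 phi2_def by simp
    finally show ?thesis unfolding norm2_eq DBv_def by simp
  qed
  show ?thesis
  proof (cases "S = {}")
    case True
    show ?thesis
    proof (intro exI[of _ 1] conjI allI impI)
      fix w assume "9/8 \<le> Bs 1 1 w" "Bs 1 1 w \<le> 11/8"
      from mem[OF this] True show "1 \<le> norm (DBv w)" by simp
    qed simp
  next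
    case False
    have cphi: "continuous_on S phi2" unfolding phi2_def FFd_def by (intro continuous_intros)
    obtain z where zS: "z \<in> S" and zmin: "\<forall>y\<in>S. phi2 z \<le> phi2 y"
      using continuous_attains_inf[OF cS False cphi] by blast
    have pz: "phi2 z > 0"
    proof (rule ccontr)
      assume "\<not> phi2 z > 0"
      have f1: "\<bar>fst z\<bar> \<le> 1" and f2: "\<bar>snd z\<bar> \<le> 1" using zS by (auto simp: S_def)
      have n1: "0 \<le> (1 - (fst z)^2) * (FFd (fst z))^2" using f1 by (simp add: abs_le_square_iff abs_square_le_1)
      have n2: "0 \<le> (1 - (snd z)^2) * (FFd (snd z))^2" using f2 by (simp add: abs_square_le_1)
      have e1: "(1 - (fst z)^2) * (FFd (fst z))^2 = 0" and e2: "(1 - (snd z)^2) * (FFd (snd z))^2 = 0"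
        using \<open>\<not> phi2 z > 0\<close> n1 n2 unfolding phi2_def by linarith+
      have l: "9/8 \<le> FF (fst z) + FF (snd z)" "FF (fst z) + FF (snd z) \<le> 11/8" using zS by (simp_all add: S_def)
      from FF_vals[OF f1 e1] FF_vals[OF f2 e2] l show False by auto
    qed
    show ?thesis
    proof (intro exI[of _ "sqrt (phi2 z)"] conjI allI impI)
      show "0 < sqrt (phi2 z)" using pz by simp
      fix w assume "9/8 \<le> Bs 1 1 w" "Bs 1 1 w \<le> 11/8"
      then have "phi2 z \<le> phi2 (cos (pi * w$1), cos (pi * w$2))" using zmin mem by blast
      moreover have "phi2 (cos (pi * w$1), cos (pi * w$2)) \<le> pi^2 * phi2 (cos (pi * w$1), cos (pi * w$2))"
      proof -
        have "0 \<le> phi2 (cos (pi * w$1), cos (pi * w$2))" unfolding phi2_def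
          by (intro add_nonneg_nonneg mult_nonneg_nonneg) (auto simp: abs_square_le_1)
        moreover have "1 \<le> pi^2" using pi_gt3 by (smt (verit) one_le_power)
        ultimately show ?thesis using mult_right_mono[of 1 "pi^2" "phi2 (cos (pi * w$1), cos (pi * w$2))"] by simp
      qed
      ultimately show "sqrt (phi2 z) \<le> norm (DBv w)" unfolding nw by simp
    qed
  qed
qed



lemma pp_pos: assumes "x > 0" shows "((\<lambda>x. (max 0 x)^n) has_real_derivative real n * (max 0 x)^(n-1)) (at x)"
proof -
  have d: "((\<lambda>x. x^n) has_real_derivative real n * x^(n-1)) (at x)" using DERIV_pow[of n x UNIV] by simp
  have e: "real n * x^(n-1) = real n * (max 0 x)^(n-1)" using assms by simp
  show ?thesis
    apply (rule has_field_derivative_transform_within_open[where S="{0<..}" and f="\<lambda>x. x^n"])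
    using d e assms apply simp_all
    done
qed

lemma pp_neg: assumes "x < 0" "2 \<le> n" shows "((\<lambda>x. (max 0 x)^n) has_real_derivative real n * (max 0 x)^(n-1)) (at x)"
proof -
  have d: "((\<lambda>x. 0) has_real_derivative 0) (at x)" by simp
  have e: "real n * (max 0 x)^(n-1) = 0" using assms by simp
  show ?thesis unfolding e
    apply (rule has_field_derivative_transform_within_open[where S="{..<0}" and f="\<lambda>x. 0"])
    using d assms apply simp_all
    done
qed

lemma pp_aux: fixes h :: real assumes h: "h \<noteq> 0" "\<bar>h\<bar> < 1" and n: "2 \<le> n"
  shows "norm ((max 0 h)^n / h) \<le> \<bar>h\<bar>"
proof -
    have a: "\<bar>max 0 h\<bar> \<le> \<bar>h\<bar>" by simp
    have "\<bar>(max 0 h)^n\<bar> = \<bar>max 0 h\<bar>^n" by (simp add: power_abs)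
    also have "\<dots> \<le> \<bar>h\<bar>^n" using a by (intro power_mono) auto
    also have "\<dots> \<le> \<bar>h\<bar>^2" using h n by (intro power_decreasing) auto
    finally have b: "\<bar>(max 0 h)^n\<bar> \<le> \<bar>h\<bar> * \<bar>h\<bar>" by (simp add: power2_eq_square)
    have "norm ((max 0 h)^n / h) = \<bar>(max 0 h)^n\<bar> / \<bar>h\<bar>" by (simp add: abs_divide)
    also have "\<dots> \<le> \<bar>h\<bar> * \<bar>h\<bar> / \<bar>h\<bar>" using b by (intro divide_right_mono) auto
    also have "\<bar>h\<bar> * \<bar>h\<bar> / \<bar>h\<bar> = \<bar>h\<bar>" using h by (intro nonzero_mult_div_cancel_right) simp
    finally show ?thesis .
qed

lemma pp_zero: assumes n: "2 \<le> n" shows "((\<lambda>x. (max 0 x)^n) has_real_derivative 0) (at 0)"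
proof -
  have ev: "\<forall>\<^sub>F h in at (0::real). norm ((max 0 h)^n / h) \<le> \<bar>h\<bar>"
    unfolding eventually_at using pp_aux[OF _ _ n] by (intro exI[of _ 1]) auto
  have g: "((\<lambda>h. \<bar>h\<bar>) \<longlongrightarrow> 0) (at (0::real))"
    using tendsto_rabs[OF tendsto_ident_at[of "0::real" UNIV]] by simp
  have "((\<lambda>h::real. (max 0 h)^n / h) \<longlongrightarrow> 0) (at 0)" by (rule Lim_null_comparison[OF ev g])
  moreover have "(\<lambda>h::real. ((max 0 (0 + h))^n - (max 0 0)^n) / h) = (\<lambda>h. (max 0 h)^n / h)" using n by (simp add: zero_power)
  ultimately show ?thesis unfolding DERIV_def by simp
qed

lemma pp_deriv: assumes n: "2 \<le> n"
  shows "((\<lambda>x. (max 0 x)^n) has_real_derivative real n * (max 0 x)^(n-1)) (at x)"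
proof -
  consider "x > 0" | "x < 0" | "x = 0" by linarith
  then show ?thesis
  proof cases
    case 1 then show ?thesis by (rule pp_pos)
  next
    case 2 then show ?thesis using n by (rule pp_neg)
  next
    case 3
    have e: "real n * (max 0 (0::real))^(n-1) = 0" using n by simp
    show ?thesis unfolding 3 e by (rule pp_zero[OF n])
  qed
qed

lemma nth_deriv: fixes x :: "real^'n" shows "(g has_real_derivative g') (at (x$i)) \<Longrightarrow> ((\<lambda>y. g (y$i)) has_derivative (\<lambda>h. g' * h$i)) (at x)"
proof -
  assume g: "(g has_real_derivative g') (at (x$i))"
  have l: "((\<lambda>y::real^'n. y$i) has_derivative (\<lambda>h. h$i)) (at x)"
    by (rule bounded_linear_imp_has_derivative[OF bounded_linear_vec_nth])
  show ?thesis using diff_chain_at[OF l g[unfolded has_field_derivative_def]] by (simp add: o_def)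
qed

lemma vec_deriv:
  fixes f :: "'a::real_normed_vector \<Rightarrow> real^'n"
  assumes "\<And>i. ((\<lambda>y. f y $ i) has_derivative (\<lambda>h. f' h $ i)) (at x)"
  shows "(f has_derivative f') (at x)"
proof -
  have "\<forall>b\<in>Basis. ((\<lambda>y. f y \<bullet> b) has_derivative (\<lambda>h. f' h \<bullet> b)) (at x)"
  proof
    fix b :: "real^'n" assume "b \<in> Basis"
    then obtain i where b: "b = axis i 1" using axis_inverse by blast
    have e: "\<And>v::real^'n. v \<bullet> b = v $ i" unfolding b inner_axis inner_real_def by (rule mult_1_right)
    show "((\<lambda>y. f y \<bullet> b) has_derivative (\<lambda>h. f' h \<bullet> b)) (at x)"
      unfolding e by (rule assms)
  qed
  then show ?thesis by (subst has_derivative_componentwise_within)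
qed

lemma test_fn_sep:
  fixes Q :: "real^2 \<Rightarrow> real" and DQ :: "real^2 \<Rightarrow> real^2" and D2Q :: "real^2 \<Rightarrow> real^2^2"
  assumes P: "\<And>t. (P has_real_derivative P' t) (at t)" and cP: "continuous_on UNIV P'"
    and Q: "\<And>x. (Q has_derivative (\<lambda>h. DQ x \<bullet> h)) (at x)"
    and DQ: "\<And>x. (DQ has_derivative (\<lambda>h. D2Q x *v h)) (at x)"
    and cD2: "continuous_on UNIV D2Q"
  shows "test_fn (\<lambda>x t. Q x + P t) (\<lambda>x t. P' t) (\<lambda>x t. DQ x) (\<lambda>x t. D2Q x)"
  unfolding test_fn_def
proof (intro conjI allI)
  fix x t
  have q: "((\<lambda>z::(real^2)\<times>real. Q (fst z)) has_derivative (\<lambda>h. DQ x \<bullet> fst h)) (at (x, t))"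
  proof -
    have f: "(fst has_derivative fst) (at (x,t))" by (rule bounded_linear_imp_has_derivative[OF bounded_linear_fst])
    show ?thesis using diff_chain_at[OF f Q[of "fst (x,t)"]] by (simp add: o_def)
  qed
  have p: "((\<lambda>z::(real^2)\<times>real. P (snd z)) has_derivative (\<lambda>h. P' t * snd h)) (at (x, t))"
  proof -
    have f: "(snd has_derivative snd) (at (x,t))" by (rule bounded_linear_imp_has_derivative[OF bounded_linear_snd])
    show ?thesis using diff_chain_at[OF f P[of "snd (x,t)", unfolded has_field_derivative_def]] by (simp add: o_def)
  qed
  show "((\<lambda>z. Q (fst z) + P (snd z)) has_derivative (\<lambda>h. DQ x \<bullet> fst h + P' t * snd h)) (at (x, t))"
    by (rule has_derivative_add[OF q p])
  show "((\<lambda>y. DQ y) has_derivative (\<lambda>h. D2Q x *v h)) (at x)" using DQ by simp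
next
  show "continuous_on UNIV (\<lambda>z::(real^2)\<times>real. P' (snd z))"
    by (rule continuous_on_compose2[OF cP continuous_on_snd]) auto
  have "continuous_on UNIV DQ"
    using DQ has_derivative_continuous by (intro continuous_at_imp_continuous_on) blast
  then show "continuous_on UNIV (\<lambda>z::(real^2)\<times>real. DQ (fst z))"
    by (rule continuous_on_compose2[OF _ continuous_on_fst]) auto
  show "continuous_on UNIV (\<lambda>z::(real^2)\<times>real. D2Q (fst z))"
    by (rule continuous_on_compose2[OF cD2 continuous_on_fst]) auto
qed

lemma test_fn_cont:
  assumes "test_fn phi pt Dp D2p"
  shows "continuous_on UNIV (\<lambda>z. phi (fst z) (snd z))"
proof -
  have "\<forall>z. ((\<lambda>z. phi (fst z) (snd z)) has_derivative (\<lambda>h. Dp (fst z) (snd z) \<bullet> fst h + pt (fst z) (snd z) * snd h)) (at z)"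
    using assms unfolding test_fn_def by auto
  then show ?thesis using has_derivative_continuous by (intro continuous_at_imp_continuous_on) blast
qed


lemma comparison:
  fixes u Psi :: "real^2 \<Rightarrow> real \<Rightarrow> real"
  assumes sub: "visc_sub a e F u"
    and cu: "continuous_on (UNIV \<times> {0..}) (\<lambda>z. u (fst z) (snd z))"
    and tf: "test_fn Psi Pt DP D2P"
    and D: "compact D" and ID: "I \<subseteq> D" and Iint: "\<And>x. x \<in> I \<Longrightarrow> \<exists>r>0. ball x r \<subseteq> D"
    and strict: "\<And>x t. x \<in> I \<Longrightarrow> 0 < t \<Longrightarrow> t < Tb \<Longrightarrow> H_upper a e F x (DP x t) (D2P x t) < Pt x t"
    and init: "\<And>x. x \<in> D \<Longrightarrow> u x 0 \<le> Psi x 0"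
    and fin: "\<And>x. x \<in> D \<Longrightarrow> u x Tb \<le> Psi x Tb"
    and bd: "\<And>x t. x \<in> D \<Longrightarrow> x \<notin> I \<Longrightarrow> 0 \<le> t \<Longrightarrow> t \<le> Tb \<Longrightarrow> u x t \<le> Psi x t"
  shows "\<And>x t. x \<in> D \<Longrightarrow> 0 \<le> t \<Longrightarrow> t \<le> Tb \<Longrightarrow> u x t \<le> Psi x t"
proof -
  define W where "W = D \<times> {0..Tb}"
  define h where "h z = u (fst z) (snd z) - Psi (fst z) (snd z)" for z
  have cW: "compact W" unfolding W_def using D by (intro compact_Times) auto
  have ch: "continuous_on W h"
  proof -
    have "continuous_on W (\<lambda>z. u (fst z) (snd z))"
      by (rule continuous_on_subset[OF cu]) (auto simp: W_def)
    moreover have "continuous_on W (\<lambda>z. Psi (fst z) (snd z))"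
      by (rule continuous_on_subset[OF test_fn_cont[OF tf]]) auto
    ultimately show ?thesis unfolding h_def by (intro continuous_intros)
  qed
  fix x t assume x: "x \<in> D" and t: "0 \<le> t" "t \<le> Tb"
  then have W0: "W \<noteq> {}" "(x, t) \<in> W" by (auto simp: W_def)
  obtain z where zW: "z \<in> W" and zmax: "\<forall>y\<in>W. h y \<le> h z"
    using continuous_attains_sup[OF cW W0(1) ch] by blast
  obtain xs ts where z: "z = (xs, ts)" by (cases z)
  have xs: "xs \<in> D" and ts: "0 \<le> ts" "ts \<le> Tb" using zW z by (auto simp: W_def)
  have "h z \<le> 0"
  proof (rule ccontr)
    assume pos: "\<not> h z \<le> 0"
    have ts0: "ts \<noteq> 0" using init[OF xs] pos z by (auto simp: h_def)
    have tsT: "ts \<noteq> Tb" using fin[OF xs] pos z by (auto simp: h_def)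
    have xI: "xs \<in> I" using bd[OF xs _ ts] pos z by (auto simp: h_def)
    obtain r where r: "r > 0" "ball xs r \<subseteq> D" using Iint[OF xI] by blast
    define r' where "r' = min r (min ts (Tb - ts))"
    have r': "r' > 0" using r ts ts0 tsT by (auto simp: r'_def)
    have lm: "loc_max_at (\<lambda>y s. u y s - Psi y s) xs ts"
      unfolding loc_max_at_def
    proof (intro exI[of _ r'] conjI allI impI)
      show "0 < r'" by (rule r')
      fix y s assume ys: "0 < s \<and> dist y xs < r' \<and> \<bar>s - ts\<bar> < r'"
      then have "y \<in> ball xs r" by (auto simp: r'_def dist_commute)
      then have "(y, s) \<in> W" using r ys by (auto simp: W_def r'_def)
      then have "h (y, s) \<le> h z" using zmax by blast
      then show "u y s - Psi y s \<le> u xs ts - Psi xs ts" by (simp add: h_def z)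
    qed
    have "Pt xs ts \<le> H_upper a e F xs (DP xs ts) (D2P xs ts)"
      using sub tf lm ts ts0 unfolding visc_sub_def by auto
    moreover have "H_upper a e F xs (DP xs ts) (D2P xs ts) < Pt xs ts"
      using strict[OF xI] ts ts0 tsT by auto
    ultimately show False by simp
  qed
  then have "h (x, t) \<le> 0" using zmax W0 by force
  then show "u x t \<le> Psi x t" by (simp add: h_def)
qed




definition FFdd :: "real \<Rightarrow> real" where "FFdd u = 2 - 3*u"

lemma FFd_deriv[derivative_intros]:
  "(f has_real_derivative f') (at x within S) \<Longrightarrow> ((\<lambda>x. FFd (f x)) has_real_derivative FFdd (f x) * f') (at x within S)"
  unfolding FFd_def FFdd_def
  by (auto intro!: derivative_eq_intros simp: algebra_simps)

definition d1 :: "real \<Rightarrow> real" where "d1 t = FFd (cos (pi*t)) * (- pi * sin (pi*t))"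
definition d2 :: "real \<Rightarrow> real" where
  "d2 t = FFdd (cos (pi*t)) * (pi * sin (pi*t))^2 - pi^2 * cos (pi*t) * FFd (cos (pi*t))"

lemma FFc_deriv: assumes "e \<noteq> 0"
  shows "((\<lambda>t. FF (cos (pi*(t/e - mi)))) has_real_derivative d1 (t/e - mi) / e) (at t)"
  unfolding d1_def using assms
  by (auto intro!: derivative_eq_intros simp: field_simps)

lemma d1_deriv: assumes "e \<noteq> 0"
  shows "((\<lambda>t. d1 (t/e - mi)) has_real_derivative d2 (t/e - mi) / e) (at t)"
  unfolding d1_def d2_def using assms
  by (auto intro!: derivative_eq_intros simp: field_simps power2_eq_square)

definition gg :: "real \<Rightarrow> real \<Rightarrow> real" where "gg b s = (max 0 (s - b))^3"
definition gg1 :: "real \<Rightarrow> real \<Rightarrow> real" where "gg1 b s = 3 * (max 0 (s - b))^2"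
definition gg2 :: "real \<Rightarrow> real \<Rightarrow> real" where "gg2 b s = 6 * max 0 (s - b)"

lemma gg_deriv: "(gg b has_real_derivative gg1 b s) (at s)"
proof -
  have "((\<lambda>s. (max 0 (s - b))^3) has_real_derivative real 3 * (max 0 (s - b))^(3-1) * 1) (at s)"
    by (rule DERIV_chain2[OF pp_deriv]) (auto intro!: derivative_eq_intros)
  then show ?thesis unfolding gg_def[abs_def] gg1_def by simp
qed

lemma gg1_deriv: "(gg1 b has_real_derivative gg2 b s) (at s)"
proof -
  have "((\<lambda>s. (max 0 (s - b))^2) has_real_derivative real 2 * (max 0 (s - b))^(2-1) * 1) (at s)"
    by (rule DERIV_chain2[OF pp_deriv]) (auto intro!: derivative_eq_intros)
  then have "((\<lambda>s. 3 * (max 0 (s - b))^2) has_real_derivative 3 * (real 2 * (max 0 (s - b))^(2-1) * 1)) (at s)"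
    by (rule DERIV_cmult)
  then show ?thesis unfolding gg1_def[abs_def] gg2_def by simp
qed

definition zc :: "real \<Rightarrow> real^2 \<Rightarrow> real^2 \<Rightarrow> 2 \<Rightarrow> real" where "zc e m x i = x$i / e - m$i"
definition Bx :: "real \<Rightarrow> real^2 \<Rightarrow> real^2 \<Rightarrow> real" where
  "Bx e m x = FF (cos (pi * zc e m x 1)) + FF (cos (pi * zc e m x 2))"
definition Qb :: "real \<Rightarrow> real^2 \<Rightarrow> real \<Rightarrow> real \<Rightarrow> real^2 \<Rightarrow> real" where
  "Qb e m M b x = M * gg b (Bx e m x)"
definition DQb :: "real \<Rightarrow> real^2 \<Rightarrow> real \<Rightarrow> real \<Rightarrow> real^2 \<Rightarrow> real^2" where
  "DQb e m M b x = (\<chi> i. M / e * gg1 b (Bx e m x) * d1 (zc e m x i))"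
definition D2Qb :: "real \<Rightarrow> real^2 \<Rightarrow> real \<Rightarrow> real \<Rightarrow> real^2 \<Rightarrow> real^2^2" where
  "D2Qb e m M b x = (\<chi> i j. M / e^2 * (gg2 b (Bx e m x) * d1 (zc e m x i) * d1 (zc e m x j)
       + gg1 b (Bx e m x) * (if i = j then d2 (zc e m x i) else 0)))"

lemma comp_FF_deriv: assumes "e \<noteq> 0"
  shows "((\<lambda>y. FF (cos (pi * zc e m y i))) has_derivative (\<lambda>h. d1 (zc e m x i) / e * h$i)) (at x)"
  unfolding zc_def using nth_deriv[OF FFc_deriv[OF assms, of "m$i" "x$i"]] by simp

lemma comp_d1_deriv: assumes "e \<noteq> 0"
  shows "((\<lambda>y. d1 (zc e m y i)) has_derivative (\<lambda>h. d2 (zc e m x i) / e * h$i)) (at x)"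
  unfolding zc_def using nth_deriv[OF d1_deriv[OF assms, of "m$i" "x$i"]] by simp

lemma Bx_deriv: assumes "e \<noteq> 0"
  shows "(Bx e m has_derivative (\<lambda>h. (d1 (zc e m x 1) * h$1 + d1 (zc e m x 2) * h$2) / e)) (at x)"
proof -
  have "((\<lambda>y. FF (cos (pi * zc e m y 1)) + FF (cos (pi * zc e m y 2))) has_derivative
      (\<lambda>h. d1 (zc e m x 1) / e * h$1 + d1 (zc e m x 2) / e * h$2)) (at x)"
    by (rule has_derivative_add[OF comp_FF_deriv[OF assms] comp_FF_deriv[OF assms]])
  then show ?thesis unfolding Bx_def[abs_def]
    by (rule has_derivative_eq_rhs) (simp add: fun_eq_iff add_divide_distrib)
qed

lemma ggB_deriv: assumes "e \<noteq> 0"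
  shows "((\<lambda>y. gg b (Bx e m y)) has_derivative (\<lambda>h. gg1 b (Bx e m x) * ((d1 (zc e m x 1) * h$1 + d1 (zc e m x 2) * h$2) / e))) (at x)"
  using diff_chain_at[OF Bx_deriv[OF assms] gg_deriv[unfolded has_field_derivative_def]]
  by (simp add: o_def)

lemma gg1B_deriv: assumes "e \<noteq> 0"
  shows "((\<lambda>y. gg1 b (Bx e m y)) has_derivative (\<lambda>h. gg2 b (Bx e m x) * ((d1 (zc e m x 1) * h$1 + d1 (zc e m x 2) * h$2) / e))) (at x)"
  using diff_chain_at[OF Bx_deriv[OF assms] gg1_deriv[unfolded has_field_derivative_def]]
  by (simp add: o_def)

lemma Q_deriv: assumes "e \<noteq> 0"
  shows "(Qb e m M b has_derivative (\<lambda>h. DQb e m M b x \<bullet> h)) (at x)"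
proof -
  have "((\<lambda>y. M * gg b (Bx e m y)) has_derivative (\<lambda>h. M * (gg1 b (Bx e m x) * ((d1 (zc e m x 1) * h$1 + d1 (zc e m x 2) * h$2) / e)))) (at x)"
    by (rule has_derivative_mult_right[OF ggB_deriv[OF assms]])
  then show ?thesis unfolding Qb_def[abs_def]
    by (rule has_derivative_eq_rhs) (simp add: fun_eq_iff DQb_def inner2_eq add_divide_distrib algebra_simps)
qed

lemma DQ_deriv: assumes "e \<noteq> 0"
  shows "(DQb e m M b has_derivative (\<lambda>h. D2Qb e m M b x *v h)) (at x)"
proof (rule vec_deriv)
  fix i
  have d: "((\<lambda>y. M / e * gg1 b (Bx e m y) * d1 (zc e m y i)) has_derivative
     (\<lambda>h. M / e * gg1 b (Bx e m x) * (d2 (zc e m x i) / e * h$i) +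
          M / e * (gg2 b (Bx e m x) * ((d1 (zc e m x 1) * h$1 + d1 (zc e m x 2) * h$2) / e)) * d1 (zc e m x i))) (at x)"
    by (rule has_derivative_mult[OF has_derivative_mult_right[OF gg1B_deriv[OF assms]] comp_d1_deriv[OF assms]])
  have f: "(\<lambda>y. DQb e m M b y $ i) = (\<lambda>y. M / e * gg1 b (Bx e m y) * d1 (zc e m y i))"
    by (simp add: DQb_def)
  have r: "(\<lambda>h. M / e * gg1 b (Bx e m x) * (d2 (zc e m x i) / e * h$i) +
          M / e * (gg2 b (Bx e m x) * ((d1 (zc e m x 1) * h$1 + d1 (zc e m x 2) * h$2) / e)) * d1 (zc e m x i))
        = (\<lambda>h. (D2Qb e m M b x *v h) $ i)"
  proof
    fix h :: "real^2"
    show "M / e * gg1 b (Bx e m x) * (d2 (zc e m x i) / e * h$i) +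
          M / e * (gg2 b (Bx e m x) * ((d1 (zc e m x 1) * h$1 + d1 (zc e m x 2) * h$2) / e)) * d1 (zc e m x i)
        = (D2Qb e m M b x *v h) $ i"
      using two_cases[of i]
      by (auto simp: D2Qb_def matrix_vector_mult_def sum_2 power2_eq_square add_divide_distrib diff_divide_distrib algebra_simps)
  qed
  show "((\<lambda>y. DQb e m M b y $ i) has_derivative (\<lambda>h. (D2Qb e m M b x *v h) $ i)) (at x)"
    unfolding f using d r by simp
qed

lemma cont_d1: "continuous_on UNIV d1" unfolding d1_def[abs_def] FFd_def by (intro continuous_intros)
lemma cont_d2: "continuous_on UNIV d2" unfolding d2_def[abs_def] FFd_def FFdd_def by (intro continuous_intros)
lemma cont_gg1: "continuous_on UNIV (gg1 b)" unfolding gg1_def[abs_def] by (intro continuous_intros)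
lemma cont_gg2: "continuous_on UNIV (gg2 b)" unfolding gg2_def[abs_def] by (intro continuous_intros)
lemma cont_zc: "continuous_on UNIV (\<lambda>x. zc e m x i)"
proof -
  have eq: "(\<lambda>x. zc e m x i) = (\<lambda>x. (1/e) * x$i - m$i)" by (simp add: zc_def fun_eq_iff)
  show ?thesis unfolding eq
    by (intro continuous_on_diff continuous_on_mult continuous_on_const continuous_on_component continuous_on_id)
qed
lemma cont_FFc: "continuous_on UNIV (\<lambda>t. FF (cos (pi * t)))" unfolding FF_def by (intro continuous_intros)

lemma cont_comp: "continuous_on UNIV f \<Longrightarrow> continuous_on UNIV g \<Longrightarrow> continuous_on UNIV (\<lambda>x. f (g x))"
  by (rule continuous_on_compose2[of UNIV f UNIV g]) auto

lemma cont_Bx: "continuous_on UNIV (Bx e m)"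
  unfolding Bx_def[abs_def]
  by (intro continuous_on_add cont_comp[OF cont_FFc cont_zc])

lemma D2Q_cont: "continuous_on UNIV (D2Qb e m M b)"
proof -
  have a: "continuous_on UNIV (\<lambda>x. d1 (zc e m x i))" for i by (rule cont_comp[OF cont_d1 cont_zc])
  have b2: "continuous_on UNIV (\<lambda>x. d2 (zc e m x i))" for i by (rule cont_comp[OF cont_d2 cont_zc])
  have c: "continuous_on UNIV (\<lambda>x. gg1 b (Bx e m x))" by (rule cont_comp[OF cont_gg1 cont_Bx])
  have d: "continuous_on UNIV (\<lambda>x. gg2 b (Bx e m x))" by (rule cont_comp[OF cont_gg2 cont_Bx])
  have e: "continuous_on UNIV (\<lambda>x. (if i = j then d2 (zc e m x i) else 0))" for i j
    by (cases "i = j") (simp_all add: b2)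
  show ?thesis unfolding D2Qb_def[abs_def]
    by (intro continuous_on_vec_lambda continuous_on_mult continuous_on_add continuous_on_const a c d e)
qed



lemma aa_shift: assumes "\<forall>i. m$i \<in> \<int>" shows "aa c K (w + m) = aa c K w"
  using aa_periodic[of c K] assms unfolding periodic2_def by blast

lemma grad_periodic: assumes "\<forall>i. m$i \<in> \<int>" shows "grad (aa c K) (w + m) = grad (aa c K) w"
proof -
  have "(\<lambda>s. aa c K (w + m + s *\<^sub>R axis i 1)) = (\<lambda>s. aa c K (w + s *\<^sub>R axis i 1))" for i
  proof
    fix s
    have eq: "w + m + s *\<^sub>R axis i 1 = (w + s *\<^sub>R axis i 1) + m" by (simp add: algebra_simps)
    show "aa c K (w + m + s *\<^sub>R axis i 1) = aa c K (w + s *\<^sub>R axis i 1)" unfolding eq by (rule aa_shift[OF assms])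
  qed
  then show ?thesis unfolding grad_def by simp
qed

lemma dBs_d1: "dBs 1 1 w i = d1 (w$i)"
  using two_cases[of i] by (auto simp: dBs_def d1_def)

lemma zc_w: "zc e m x i = ((1/e) *\<^sub>R x - m) $ i"
  by (simp add: zc_def)

lemma Bx_eq: "Bx e m x = Bs 1 1 ((1/e) *\<^sub>R x - m)"
  by (simp add: Bx_def Bs_def zc_w)

lemma DQ_eq: "DQb e m M b x = (M / e * gg1 b (Bx e m x)) *\<^sub>R DBv ((1/e) *\<^sub>R x - m)"
  by (simp add: vec_eq_iff DQb_def DBv_def dBs_d1 zc_w)

lemma D2Q_entries: "D2Qb e m M b x $ i $ j = (M / e^2 * gg2 b (Bx e m x)) * DBv ((1/e) *\<^sub>R x - m) $ i * DBv ((1/e) *\<^sub>R x - m) $ j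
   + (M / e^2 * gg1 b (Bx e m x)) * (if i = j then d2 (((1/e) *\<^sub>R x - m) $ i) else 0)"
  by (simp add: D2Qb_def DBv_def dBs_d1 zc_w algebra_simps)

lemma mc_formula:
  fixes v :: "real^2" and X :: "real^2^2"
  assumes v: "v \<noteq> 0" and X: "\<And>i j. X$i$j = \<alpha> * v$i * v$j + \<beta> * (if i = j then d i else 0)"
  shows "mc_term X ((1 / norm v) *\<^sub>R v) = \<beta> * (d 1 * (v$2)^2 + d 2 * (v$1)^2) / (norm v)^2"
proof -
  define N where "N = norm v"
  define q1 where "q1 = v$1 / N"
  define q2 where "q2 = v$2 / N"
  have N2: "N^2 = (v$1)^2 + (v$2)^2" unfolding N_def norm2_eq by simp
  have N0: "N \<noteq> 0" using v N_def by simp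
  have v1: "v$1 = N * q1" and v2: "v$2 = N * q2" using N0 by (simp_all add: q1_def q2_def)
  have qq: "q1^2 + q2^2 = 1"
  proof -
    have "N^2 * (q1^2 + q2^2) = N^2 * 1" using N2 unfolding v1 v2 by (simp add: algebra_simps power_mult_distrib)
    then show ?thesis using N0 by simp
  qed
  have e1: "mc_term X ((1 / N) *\<^sub>R v) = (X$1$1 + X$2$2) - (q1 * (X$1$1 * q1 + X$1$2 * q2) + q2 * (X$2$1 * q1 + X$2$2 * q2))"
    by (simp add: mc_term_def trace_def sum_2 inner2_eq matrix_vector_mult_def q1_def q2_def)
  have e2: "(X$1$1 + X$2$2) - (q1 * (X$1$1 * q1 + X$1$2 * q2) + q2 * (X$2$1 * q1 + X$2$2 * q2))
      = \<beta> * (d 1 * q2^2 + d 2 * q1^2)"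
    unfolding X v1 v2 using qq by simp algebra
  have e3: "\<beta> * (d 1 * (v$2)^2 + d 2 * (v$1)^2) / N^2 = \<beta> * (d 1 * q2^2 + d 2 * q1^2)"
    unfolding v1 v2 using N0 by (simp add: power_mult_distrib field_simps)
  show ?thesis unfolding N_def[symmetric] e1 e2 e3 ..
qed

lemma pi2_le: "pi^2 \<le> 10"
proof -
  have p: "pi \<le> 3.16" using pi_approx(2) by simp
  have "pi * pi \<le> 3.16 * 3.16" by (rule mult_mono[OF p p]) auto
  moreover have "(3.16::real) * 3.16 \<le> 10" by simp
  ultimately show ?thesis by (simp add: power2_eq_square)
qed

lemma d2_bound: "\<bar>d2 t\<bar> \<le> 100"
proof -
  define C where "C = cos (pi*t)"
  define S where "S = sin (pi*t)"
  have C: "\<bar>C\<bar> \<le> 1" unfolding C_def by simp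
  have S2: "S^2 \<le> 1" unfolding S_def by (simp add: abs_square_le_1)
  have Cb: "-1 \<le> C" "C \<le> 1" using C by (auto simp: abs_le_iff)
  have f1: "\<bar>FFdd C\<bar> \<le> 5" unfolding FFdd_def abs_le_iff using Cb by linarith
  have "C^2 \<le> 1" using C abs_square_le_1 by blast
  then have CC: "C*C \<le> 1" by (simp add: power2_eq_square)
  have g1: "\<bar>FFd C\<bar> \<le> \<bar>2*C\<bar> + \<bar>3/2*(C*C)\<bar>" unfolding FFd_def by (rule abs_triangle_ineq4)
  have g2: "\<bar>2*C\<bar> \<le> 2" using C by (simp add: abs_mult)
  have g3: "\<bar>3/2*(C*C)\<bar> \<le> 3/2" using CC by (simp add: abs_mult)
  have f2: "\<bar>FFd C\<bar> \<le> 4" using g1 g2 g3 by linarith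
  have p: "0 \<le> pi^2" "pi^2 \<le> 10" using pi2_le by auto
  have t1: "\<bar>FFdd C * (pi * S)^2\<bar> \<le> 50"
  proof -
    have "\<bar>FFdd C * (pi * S)^2\<bar> = \<bar>FFdd C\<bar> * (pi^2 * S^2)" by (simp add: abs_mult power_mult_distrib)
    also have "\<dots> \<le> 5 * (10 * 1)" using f1 p S2 by (intro mult_mono) auto
    finally show ?thesis by simp
  qed
  have t2: "\<bar>pi^2 * C * FFd C\<bar> \<le> 40"
  proof -
    have "\<bar>pi^2 * C * FFd C\<bar> = pi^2 * (\<bar>C\<bar> * \<bar>FFd C\<bar>)" by (simp add: abs_mult)
    also have "\<dots> \<le> 10 * (1 * 4)" using p C f2 by (intro mult_mono) auto
    finally show ?thesis by simp
  qed
  show ?thesis unfolding d2_def C_def[symmetric] S_def[symmetric] using t1 t2 by linarith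
qed

lemma sphere_ne: "sphere (0::real^2) 1 \<noteq> {}"
proof -
  have "axis 1 (1::real) \<in> sphere (0::real^2) 1" by simp
  then show ?thesis by blast
qed

lemma mc_zero: "mc_term 0 q = 0"
  by (simp add: mc_term_def trace_def)



lemma H_bar:
  assumes c: "c > 0" and K: "K \<ge> 8" and F: "\<bar>F\<bar> < 1" and d0: "d0 > 0"
    and Kc: "100 * (1 + 4*c) / d0^2 + 1 / d0 \<le> c * K / 81"
    and dlow: "\<And>w. 9/8 \<le> Bs 1 1 w \<Longrightarrow> Bs 1 1 w \<le> 11/8 \<Longrightarrow> d0 \<le> norm (DBv w)"
    and e: "e > 0" and M: "M > 0" and m: "\<forall>i. m$i \<in> \<int>"
    and b: "b = 5/4 - 1/K" and xB: "Bx e m x < 5/4 + 1/K"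
  shows "H_upper (aa c K) e F x (DQb e m M b x) (D2Qb e m M b x) \<le> 0"
proof -
  define w where "w = (1/e) *\<^sub>R x - m"
  have xw: "(1/e) *\<^sub>R x = w + m" unfolding w_def by simp
  have Bw: "Bx e m x = Bs 1 1 w" unfolding w_def by (rule Bx_eq)
  have a_eq: "aa c K ((1/e) *\<^sub>R x) = aa c K w" unfolding xw by (rule aa_shift[OF m])
  have g_eq: "grad (aa c K) ((1/e) *\<^sub>R x) = grad (aa c K) w" unfolding xw by (rule grad_periodic[OF m])
  show ?thesis
  proof (cases "Bx e m x \<le> b")
    case True
    have z1: "gg1 b (Bx e m x) = 0" and z2: "gg2 b (Bx e m x) = 0" using True by (auto simp: gg1_def gg2_def)
    have DQ0: "DQb e m M b x = 0" by (simp add: DQb_def z1 vec_eq_iff)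
    have D2Q0: "D2Qb e m M b x = 0" by (simp add: D2Qb_def z1 z2 vec_eq_iff)
    show ?thesis unfolding H_upper_def DQ0 D2Q0 using sphere_ne by (simp add: mc_zero)
  next
    case False
    define \<kappa> where "\<kappa> = M / e * gg1 b (Bx e m x)"
    define \<beta> where "\<beta> = M / e^2 * gg1 b (Bx e m x)"
    define v where "v = DBv w"
    define N where "N = norm v"
    have gpos: "gg1 b (Bx e m x) > 0" using False by (simp add: gg1_def)
    have kpos: "\<kappa> > 0" unfolding \<kappa>_def using M e gpos by simp
    have bpos: "\<beta> > 0" unfolding \<beta>_def using M e gpos by simp
    have kb: "\<kappa> / e = \<beta>" unfolding \<kappa>_def \<beta>_def using e by (simp add: power2_eq_square)
    have band: "\<bar>Bs 1 1 w - 5/4\<bar> \<le> 1/K" using False xB b Bw by auto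
    have K8: "1/K \<le> 1/8" using K by (simp add: field_simps)
    have Nd: "d0 \<le> N" unfolding N_def v_def
      by (rule dlow) (use band K8 in \<open>auto simp: abs_le_iff\<close>)
    have N0: "N > 0" using Nd d0 by simp
    have v0: "v \<noteq> 0" using N0 N_def by auto
    have p: "DQb e m M b x = \<kappa> *\<^sub>R v" unfolding DQ_eq \<kappa>_def v_def w_def ..
    have p0: "\<kappa> *\<^sub>R v \<noteq> 0" using kpos v0 by simp
    have np: "norm (\<kappa> *\<^sub>R v) = \<kappa> * N" using kpos N_def by simp
    have q: "(1 / norm (\<kappa> *\<^sub>R v)) *\<^sub>R (\<kappa> *\<^sub>R v) = (1 / norm v) *\<^sub>R v"
      unfolding np N_def using kpos by simp
    have X: "D2Qb e m M b x $ i $ j = (M / e^2 * gg2 b (Bx e m x)) * v$i * v$j + \<beta> * (if i = j then d2 (w$i) else 0)" for i j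
      unfolding D2Q_entries v_def w_def \<beta>_def by simp
    have mc: "mc_term (D2Qb e m M b x) ((1 / norm v) *\<^sub>R v) = \<beta> * (d2 (w$1) * (v$2)^2 + d2 (w$2) * (v$1)^2) / (norm v)^2"
      by (rule mc_formula[OF v0 X])
    have mcb: "mc_term (D2Qb e m M b x) ((1 / norm v) *\<^sub>R v) \<le> 100 * \<beta>"
    proof -
      have "d2 (w$1) * (v$2)^2 + d2 (w$2) * (v$1)^2 \<le> 100 * (v$2)^2 + 100 * (v$1)^2"
        using d2_bound[of "w$1"] d2_bound[of "w$2"]
        by (intro add_mono mult_right_mono) (auto simp: abs_le_iff)
      also have "\<dots> = 100 * (norm v)^2" unfolding norm2_eq by simp
      finally have "\<beta> * (d2 (w$1) * (v$2)^2 + d2 (w$2) * (v$1)^2) \<le> \<beta> * (100 * (norm v)^2)"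
        using bpos by (intro mult_left_mono) auto
      then show ?thesis unfolding mc using N0 N_def by (simp add: field_simps)
    qed
    have arange: "1 \<le> aa c K w" "aa c K w \<le> 1 + 4*c" using aa_range[of c K w] c by auto
    have t1: "aa c K w * mc_term (D2Qb e m M b x) ((1 / norm v) *\<^sub>R v) \<le> (1 + 4*c) * (100 * \<beta>)"
    proof -
      have "aa c K w * mc_term (D2Qb e m M b x) ((1 / norm v) *\<^sub>R v) \<le> aa c K w * (100 * \<beta>)"
        using mcb arange by (intro mult_left_mono) auto
      also have "\<dots> \<le> (1 + 4*c) * (100 * \<beta>)" using arange bpos by (intro mult_right_mono) auto
      finally show ?thesis .
    qed
    have t2: "(1/e) * (grad (aa c K) w \<bullet> (\<kappa> *\<^sub>R v)) = \<beta> * (grad (aa c K) w \<bullet> v)"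
    proof -
      have "(1/e) * (grad (aa c K) w \<bullet> (\<kappa> *\<^sub>R v)) = (\<kappa> / e) * (grad (aa c K) w \<bullet> v)" by simp
      then show ?thesis unfolding kb .
    qed
    have t3: "(1/e) * F * norm (\<kappa> *\<^sub>R v) \<le> \<beta> * (\<bar>F\<bar> * N)"
    proof -
      have "(1/e) * F * norm (\<kappa> *\<^sub>R v) = (\<kappa> / e) * (F * N)" unfolding np by (simp add: algebra_simps)
      then have "(1/e) * F * norm (\<kappa> *\<^sub>R v) = \<beta> * (F * N)" unfolding kb .
      also have "\<dots> \<le> \<beta> * (\<bar>F\<bar> * N)" using bpos N0 by (intro mult_left_mono mult_right_mono) auto
      finally show ?thesis .
    qed
    have key: "100 * (1 + 4*c) + grad (aa c K) w \<bullet> v + \<bar>F\<bar> * N \<le> 0"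
      unfolding v_def N_def by (rule key_ineq[OF c _ F d0 Kc band]) (use K Nd N_def v_def in auto)
    have "H_upper (aa c K) e F x (DQb e m M b x) (D2Qb e m M b x)
        = aa c K w * mc_term (D2Qb e m M b x) ((1 / norm v) *\<^sub>R v) + (1/e) * (grad (aa c K) w \<bullet> (\<kappa> *\<^sub>R v)) + (1/e) * F * norm (\<kappa> *\<^sub>R v)"
      unfolding H_upper_def p using p0 a_eq g_eq q by simp
    also have "\<dots> \<le> (1 + 4*c) * (100 * \<beta>) + \<beta> * (grad (aa c K) w \<bullet> v) + \<beta> * (\<bar>F\<bar> * N)"
      using t1 t2 t3 by linarith
    also have "\<dots> = \<beta> * (100 * (1 + 4*c) + grad (aa c K) w \<bullet> v + \<bar>F\<bar> * N)" by (simp add: algebra_simps)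
    also have "\<dots> \<le> 0" using bpos key by (simp add: mult_nonneg_nonpos)
    finally show ?thesis .
  qed
qed



lemma FF_nonneg: "\<bar>u\<bar> \<le> 1 \<Longrightarrow> 0 \<le> FF u"
proof -
  assume "\<bar>u\<bar> \<le> 1"
  then have "0 \<le> 1 - u/2" by (auto simp: abs_le_iff)
  moreover have "0 \<le> u*u" by simp
  ultimately have "0 \<le> (u*u) * (1 - u/2)" using mult_nonneg_nonneg by blast
  then show ?thesis by (simp add: FF_def algebra_simps)
qed

lemma FF_le_half: "0 \<le> u \<Longrightarrow> u \<le> 1 \<Longrightarrow> FF u \<le> 1/2"
proof -
  assume u: "0 \<le> u" "u \<le> 1"
  have "0 \<le> (1 - u) * (1 + u - u*u)"
  proof (intro mult_nonneg_nonneg)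
    show "0 \<le> 1 - u" using u by simp
    have "u*u \<le> u" using u by (simp add: mult_left_le_one_le)
    then show "0 \<le> 1 + u - u*u" by simp
  qed
  then show ?thesis by (simp add: FF_def algebra_simps)
qed

lemma D_mem: assumes "e > 0"
  shows "y \<in> cbox (\<chi> i. e * (m$i - 1)) (\<chi> i. e * (m$i + 1)) \<longleftrightarrow> (\<forall>i. \<bar>zc e m y i\<bar> \<le> 1)"
proof -
  have "e * (m$i - 1) \<le> y$i \<and> y$i \<le> e * (m$i + 1) \<longleftrightarrow> \<bar>zc e m y i\<bar> \<le> 1" for i
  proof -
    have "e * (m$i - 1) \<le> y$i \<longleftrightarrow> m$i - 1 \<le> y$i / e" using assms by (simp add: field_simps)
    moreover have "y$i \<le> e * (m$i + 1) \<longleftrightarrow> y$i / e \<le> m$i + 1" using assms by (simp add: field_simps)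
    ultimately show ?thesis unfolding zc_def abs_le_iff by linarith
  qed
  then show ?thesis by (simp add: mem_box_cart)
qed

lemma Bx_boundary: assumes "\<forall>i. \<bar>zc e m y i\<bar> \<le> 1" "\<bar>zc e m y j\<bar> = 1" shows "Bx e m y \<ge> 3/2"
proof -
  have cj: "cos (pi * zc e m y j) = -1"
  proof -
    have "zc e m y j = 1 \<or> zc e m y j = -1" using assms(2) by auto
    then show ?thesis by auto
  qed
  have n1: "0 \<le> FF (cos (pi * zc e m y 1))" "0 \<le> FF (cos (pi * zc e m y 2))" by (simp_all add: FF_nonneg)
  have f: "FF (-1) = 3/2" by (simp add: FF_def)
  show ?thesis using two_cases[of j] cj n1 f unfolding Bx_def by auto
qed

lemma Bx_center: assumes "\<forall>i. \<bar>zc e m y i\<bar> \<le> 1/2" shows "Bx e m y \<le> 1"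
proof -
  have "FF (cos (pi * zc e m y i)) \<le> 1/2" for i
  proof (rule FF_le_half)
    have "\<bar>pi * zc e m y i\<bar> = pi * \<bar>zc e m y i\<bar>" by (simp add: abs_mult)
    also have "\<dots> \<le> pi * (1/2)" using assms[rule_format, of i] by (intro mult_left_mono) auto
    finally have h: "\<bar>pi * zc e m y i\<bar> \<le> pi/2" by simp
    have "-(pi/2) \<le> pi * zc e m y i \<and> pi * zc e m y i \<le> pi/2" using h by arith
    then show "0 \<le> cos (pi * zc e m y i)" by (intro cos_ge_zero) auto
  qed simp
  from this[of 1] this[of 2] show ?thesis unfolding Bx_def by linarith
qed

lemma P_deriv: "((\<lambda>s. lam + eta * s + Kt * (max 0 (s - T))^2) has_real_derivative eta + Kt * (2 * max 0 (s - T))) (at s)"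
proof -
  have a: "((\<lambda>s. (max 0 (s - T))^2) has_real_derivative real 2 * (max 0 (s - T))^(2-1) * 1) (at s)"
    by (rule DERIV_chain2[OF pp_deriv]) (auto intro!: derivative_eq_intros)
  have "((\<lambda>s. lam + eta * s + Kt * (max 0 (s - T))^2) has_real_derivative 0 + eta * 1 + Kt * (real 2 * (max 0 (s - T))^(2-1) * 1)) (at s)"
    by (intro DERIV_add DERIV_cmult a DERIV_const DERIV_ident)
  then show ?thesis by simp
qed

lemma P_cont: "continuous_on UNIV (\<lambda>s::real. eta + Kt * (2 * max 0 (s - T)))"
  by (intro continuous_intros)



lemma upper_eta:
  fixes u :: "real^2 \<Rightarrow> real \<Rightarrow> real"
  assumes c: "c > 0" and K: "K \<ge> 8" and F: "\<bar>F\<bar> < 1" and d0: "d0 > 0"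
    and Kc: "100 * (1 + 4*c) / d0^2 + 1 / d0 \<le> c * K / 81"
    and dlow: "\<And>w. 9/8 \<le> Bs 1 1 w \<Longrightarrow> Bs 1 1 w \<le> 11/8 \<Longrightarrow> d0 \<le> norm (DBv w)"
    and e: "e > 0" and cu: "continuous_on (UNIV \<times> {0..}) (\<lambda>z. u (fst z) (snd z))"
    and sub: "visc_sub (aa c K) e F u"
    and m: "\<forall>i. m$i \<in> \<int>" and xm: "\<forall>i. \<bar>zc e m x i\<bar> \<le> 1/2"
    and init: "\<And>y. \<forall>i. \<bar>zc e m y i\<bar> \<le> 1 \<Longrightarrow> u y 0 \<le> lam"
    and t: "0 \<le> t" and eta: "eta > 0"
  shows "u x t \<le> lam + eta * t"
proof -
  define b where "b = 5/4 - 1/K"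
  define b1 where "b1 = 5/4 + 1/K"
  define D where "D = cbox (\<chi> i. e * (m$i - 1)) (\<chi> i. e * (m$i + 1))"
  define I where "I = {y \<in> D. Bx e m y < b1}"
  define W where "W = D \<times> {0..t+1}"
  have K0: "K > 0" using K by simp
  have K8: "1/K \<le> 1/8" using K by (simp add: field_simps)
  have Dm: "y \<in> D \<longleftrightarrow> (\<forall>i. \<bar>zc e m y i\<bar> \<le> 1)" for y unfolding D_def by (rule D_mem[OF e])
  have cD: "compact D" unfolding D_def by (rule compact_cbox)
  have cW: "compact W" unfolding W_def using cD by (intro compact_Times) auto
  have WU: "W \<subseteq> UNIV \<times> {0..}" unfolding W_def by auto
  have "compact ((\<lambda>z. u (fst z) (snd z)) ` W)"
    by (rule compact_continuous_image[OF continuous_on_subset[OF cu WU] cW])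
  then obtain B where B: "\<forall>y\<in>(\<lambda>z. u (fst z) (snd z)) ` W. norm y \<le> B"
    using compact_imp_bounded bounded_iff by metis
  define Mu where "Mu = max 0 B"
  have Mu: "\<And>y s. y \<in> D \<Longrightarrow> 0 \<le> s \<Longrightarrow> s \<le> t + 1 \<Longrightarrow> u y s \<le> Mu"
  proof -
    fix y s assume "y \<in> D" "0 \<le> s" "s \<le> t + 1"
    then have "(y, s) \<in> W" unfolding W_def by auto
    then have "norm (u y s) \<le> B" using B by force
    then show "u y s \<le> Mu" unfolding Mu_def by auto
  qed
  have Mu0: "0 \<le> Mu" unfolding Mu_def by simp
  define Kt where "Kt = Mu + \<bar>lam\<bar> + 1"
  have Kt0: "Kt > 0" unfolding Kt_def using Mu0 by simp
  have gb1: "gg b b1 > 0" unfolding gg_def b_def b1_def using K0 by simp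
  define M where "M = Kt / gg b b1"
  have M0: "M > 0" unfolding M_def using Kt0 gb1 by simp
  have Mg: "M * gg b b1 = Kt" unfolding M_def using gb1 by simp
  have gg0: "0 \<le> gg b s" for s unfolding gg_def by simp
  have Q0: "0 \<le> Qb e m M b y" for y unfolding Qb_def using M0 gg0 by simp
  have tf: "test_fn (\<lambda>x s. Qb e m M b x + (lam + eta * s + Kt * (max 0 (s - t))^2))
     (\<lambda>x s. eta + Kt * (2 * max 0 (s - t))) (\<lambda>x s. DQb e m M b x) (\<lambda>x s. D2Qb e m M b x)"
    by (rule test_fn_sep[OF P_deriv P_cont Q_deriv DQ_deriv D2Q_cont]) (use e in auto)
  have Iint: "\<exists>r>0. ball y r \<subseteq> D" if yI: "y \<in> I" for y
  proof -
    have yD: "\<forall>i. \<bar>zc e m y i\<bar> \<le> 1" using yI Dm unfolding I_def by auto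
    have lt: "\<bar>zc e m y i\<bar> < 1" for i
    proof (rule ccontr)
      assume "\<not> \<bar>zc e m y i\<bar> < 1"
      moreover have "\<bar>zc e m y i\<bar> \<le> 1" using yD by blast
      ultimately have "\<bar>zc e m y i\<bar> = 1" by linarith
      then have "Bx e m y \<ge> 3/2" by (rule Bx_boundary[OF yD])
      moreover have "Bx e m y < b1" using yI unfolding I_def by auto
      ultimately show False using K8 unfolding b1_def by simp
    qed
    define r where "r = e * min (1 - \<bar>zc e m y 1\<bar>) (1 - \<bar>zc e m y 2\<bar>)"
    have r0: "r > 0" unfolding r_def using e lt[of 1] lt[of 2] by simp
    have "ball y r \<subseteq> D"
    proof
      fix y' assume "y' \<in> ball y r"
      then have d: "dist y y' < r" by simp
      have "\<bar>zc e m y' i\<bar> \<le> 1" for i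
      proof -
        have "\<bar>y'$i - y$i\<bar> \<le> norm (y' - y)" using component_le_norm_cart[of "y' - y" i] by simp
        also have "\<dots> < r" using d by (simp add: dist_norm norm_minus_commute)
        also have "\<dots> \<le> e * (1 - \<bar>zc e m y i\<bar>)" unfolding r_def using e two_cases[of i] by auto
        finally have "\<bar>y'$i - y$i\<bar> / e < 1 - \<bar>zc e m y i\<bar>" using e by (simp add: field_simps)
        moreover have "zc e m y' i = zc e m y i + (y'$i - y$i) / e" unfolding zc_def by (simp add: diff_divide_distrib)
        moreover have "\<bar>(y'$i - y$i) / e\<bar> = \<bar>y'$i - y$i\<bar> / e" using e by (simp add: abs_divide)
        moreover have "\<bar>zc e m y i + (y'$i - y$i) / e\<bar> \<le> \<bar>zc e m y i\<bar> + \<bar>(y'$i - y$i) / e\<bar>"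
          by (rule abs_triangle_ineq)
        ultimately show ?thesis by linarith
      qed
      then show "y' \<in> D" using Dm by blast
    qed
    then show ?thesis using r0 by blast
  qed
  have cmp: "\<And>x' s. x' \<in> D \<Longrightarrow> 0 \<le> s \<Longrightarrow> s \<le> t + 1 \<Longrightarrow>
      u x' s \<le> Qb e m M b x' + (lam + eta * s + Kt * (max 0 (s - t))^2)"
  proof (rule comparison[OF sub cu tf cD _ Iint])
    show "I \<subseteq> D" unfolding I_def by auto
  next
    fix x' s assume xI: "x' \<in> I" and s: "0 < s" "s < t + 1"
    have "H_upper (aa c K) e F x' (DQb e m M b x') (D2Qb e m M b x') \<le> 0"
      by (rule H_bar[OF c K F d0 Kc dlow e M0 m b_def]) (use xI in \<open>auto simp: I_def b1_def\<close>)
    also have "0 < eta + Kt * (2 * max 0 (s - t))" using eta Kt0 by (simp add: add_pos_nonneg)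
    finally show "H_upper (aa c K) e F x' (DQb e m M b x') (D2Qb e m M b x') < eta + Kt * (2 * max 0 (s - t))" .
  next
    fix x' assume "x' \<in> D"
    then have "u x' 0 \<le> lam" using init Dm by blast
    then show "u x' 0 \<le> Qb e m M b x' + (lam + eta * 0 + Kt * (max 0 (0 - t))^2)" using Q0[of x'] t by simp
  next
    fix x' assume xD: "x' \<in> D"
    have "u x' (t+1) \<le> Mu" using Mu[OF xD] t by simp
    moreover have "eta * (t + 1) \<ge> 0" using eta t by simp
    ultimately show "u x' (t+1) \<le> Qb e m M b x' + (lam + eta * (t+1) + Kt * (max 0 (t + 1 - t))^2)"
      using Q0[of x'] unfolding Kt_def by simp
  next
    fix x' s assume xD: "x' \<in> D" and xI: "x' \<notin> I" and s: "0 \<le> s" "s \<le> t + 1"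
    have Bb: "b1 \<le> Bx e m x'" using xD xI unfolding I_def by auto
    have "gg b b1 \<le> gg b (Bx e m x')" unfolding gg_def using Bb by (intro power_mono) auto
    then have "Kt \<le> Qb e m M b x'" unfolding Qb_def Mg[symmetric] using M0 by (intro mult_left_mono) auto
    moreover have "u x' s \<le> Mu" using Mu[OF xD s] .
    moreover have "0 \<le> eta * s" "0 \<le> Kt * (max 0 (s - t))^2" using eta s Kt0 by auto
    ultimately show "u x' s \<le> Qb e m M b x' + (lam + eta * s + Kt * (max 0 (s - t))^2)"
      unfolding Kt_def by linarith
  qed
  have "\<forall>i. \<bar>zc e m x i\<bar> \<le> 1"
  proof
    fix i show "\<bar>zc e m x i\<bar> \<le> 1" using xm[rule_format, of i] by linarith
  qed
  then have xD: "x \<in> D" using Dm by blast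
  have "u x t \<le> Qb e m M b x + (lam + eta * t + Kt * (max 0 (t - t))^2)" using cmp[OF xD t] by simp
  moreover have "Qb e m M b x = 0"
  proof -
    have "Bx e m x \<le> 1" by (rule Bx_center[OF xm])
    moreover have "1 < b" unfolding b_def using K8 by simp
    ultimately show ?thesis unfolding Qb_def gg_def by simp
  qed
  ultimately show ?thesis by simp
qed



lemma upper:
  fixes u :: "real^2 \<Rightarrow> real \<Rightarrow> real"
  assumes c: "c > 0" and K: "K \<ge> 8" and F: "\<bar>F\<bar> < 1" and d0: "d0 > 0"
    and Kc: "100 * (1 + 4*c) / d0^2 + 1 / d0 \<le> c * K / 81"
    and dlow: "\<And>w. 9/8 \<le> Bs 1 1 w \<Longrightarrow> Bs 1 1 w \<le> 11/8 \<Longrightarrow> d0 \<le> norm (DBv w)"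
    and e: "e > 0" and cu: "continuous_on (UNIV \<times> {0..}) (\<lambda>z. u (fst z) (snd z))"
    and sub: "visc_sub (aa c K) e F u"
    and m: "\<forall>i. m$i \<in> \<int>" and xm: "\<forall>i. \<bar>zc e m x i\<bar> \<le> 1/2"
    and init: "\<And>y. \<forall>i. \<bar>zc e m y i\<bar> \<le> 1 \<Longrightarrow> u y 0 \<le> lam"
    and t: "0 \<le> t"
  shows "u x t \<le> lam"
proof (rule ccontr)
  assume "\<not> u x t \<le> lam"
  then have pos: "u x t - lam > 0" by simp
  define eta where "eta = (u x t - lam) / (2 * (t + 1))"
  have eta0: "eta > 0" unfolding eta_def using pos t by simp
  have "u x t \<le> lam + eta * t" by (rule upper_eta[OF c K F d0 Kc dlow e cu sub m xm init t eta0])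
  moreover have "eta * t \<le> (u x t - lam) / 2"
  proof -
    have "eta * t = (u x t - lam) / 2 * (t / (t + 1))" unfolding eta_def using t by (simp add: field_simps)
    also have "\<dots> \<le> (u x t - lam) / 2 * 1" using pos t by (intro mult_left_mono) auto
    finally show ?thesis by simp
  qed
  ultimately have "u x t - lam \<le> (u x t - lam) / 2" by linarith
  then show False using pos by (simp add: field_simps)
qed

lemma trace_neg: "trace (- X) = - trace (X::real^'n^'n)"
  by (simp add: trace_def sum_negf)

lemma mvm_neg: "(- X) *v q = - (X *v (q::real^'n))"
  by (simp add: matrix_vector_mult_def sum_negf vec_eq_iff)

lemma mvm_neg2: "X *v (- q) = - (X *v (q::real^'n))"
  by (simp add: matrix_vector_mult_def sum_negf vec_eq_iff)

lemma mc_negX: "mc_term (- X) q = - mc_term X q"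
  by (simp add: mc_term_def trace_neg mvm_neg)

lemma mc_negq: "mc_term X (- q) = mc_term X q"
  by (simp add: mc_term_def mvm_neg2)

lemma INF_neg: "(INF q\<in>S. - f q) = - (SUP q\<in>S. f q :: real)"
  by (simp add: Inf_real_def image_image)

lemma H_neg: "H_upper a e (-F) x p X = - H_lower a e F x (-p) (-X)"
proof (cases "p = 0")
  case True
  then show ?thesis by (simp add: H_upper_def H_lower_def mc_negX INF_neg)
next
  case False
  have q: "(1 / norm (-p)) *\<^sub>R (-p) = - ((1 / norm p) *\<^sub>R p)" by simp
  show ?thesis using False
    by (simp add: H_upper_def H_lower_def q mc_negX mc_negq algebra_simps)
qed

lemma test_fn_neg:
  assumes "test_fn phi pt Dp D2p"
  shows "test_fn (\<lambda>x t. - phi x t) (\<lambda>x t. - pt x t) (\<lambda>x t. - Dp x t) (\<lambda>x t. - D2p x t)"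
  unfolding test_fn_def
proof (intro conjI allI)
  fix x t
  have d: "((\<lambda>z. phi (fst z) (snd z)) has_derivative (\<lambda>h. Dp x t \<bullet> fst h + pt x t * snd h)) (at (x, t))"
    using assms unfolding test_fn_def by blast
  show "((\<lambda>z. - phi (fst z) (snd z)) has_derivative (\<lambda>h. - Dp x t \<bullet> fst h + - pt x t * snd h)) (at (x, t))"
    using has_derivative_minus[OF d] by (rule has_derivative_eq_rhs) (simp add: fun_eq_iff)
  have d2: "((\<lambda>y. Dp y t) has_derivative (\<lambda>h. D2p x t *v h)) (at x)"
    using assms unfolding test_fn_def by blast
  show "((\<lambda>y. - Dp y t) has_derivative (\<lambda>h. (- D2p x t) *v h)) (at x)"
    using has_derivative_minus[OF d2] by (rule has_derivative_eq_rhs) (simp add: fun_eq_iff mvm_neg)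
next
  show "continuous_on UNIV (\<lambda>z. - pt (fst z) (snd z))"
    using assms unfolding test_fn_def by (intro continuous_on_minus) blast
  show "continuous_on UNIV (\<lambda>z. - Dp (fst z) (snd z))"
    using assms unfolding test_fn_def by (intro continuous_on_minus) blast
  show "continuous_on UNIV (\<lambda>z. - D2p (fst z) (snd z))"
    using assms unfolding test_fn_def by (intro continuous_on_minus) blast
qed

lemma super_neg: assumes "visc_super a e F u" shows "visc_sub a e (-F) (\<lambda>x t. - u x t)"
  unfolding visc_sub_def
proof (intro allI impI)
  fix phi pt Dp D2p x t
  assume h: "test_fn phi pt Dp D2p \<and> 0 < t \<and> loc_max_at (\<lambda>y s. - u y s - phi y s) x t"
  have tf: "test_fn (\<lambda>x t. - phi x t) (\<lambda>x t. - pt x t) (\<lambda>x t. - Dp x t) (\<lambda>x t. - D2p x t)"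
    using h test_fn_neg by blast
  have lm: "loc_min_at (\<lambda>y s. u y s - (- phi y s)) x t"
    using h unfolding loc_max_at_def loc_min_at_def by (smt (verit))
  have "- pt x t \<ge> H_lower a e F x (- Dp x t) (- D2p x t)"
    using assms tf lm h unfolding visc_super_def by blast
  then show "pt x t \<le> H_upper a e (-F) x (Dp x t) (D2p x t)" unfolding H_neg by simp
qed



lemma round_vec: assumes e: "e > 0"
  shows "\<exists>m::real^2. (\<forall>i. m$i \<in> \<int>) \<and> (\<forall>i. \<bar>zc e m x i\<bar> \<le> 1/2)"
proof (intro exI[of _ "\<chi> i. of_int \<lfloor>x$i / e + 1/2\<rfloor>"] conjI allI)
  fix i
  show "(\<chi> i. real_of_int \<lfloor>x$i / e + 1/2\<rfloor>) $ i \<in> \<int>" by simp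
  have a: "real_of_int \<lfloor>x$i / e + 1/2\<rfloor> \<le> x$i / e + 1/2" by (rule of_int_floor_le)
  have b: "x$i / e + 1/2 < real_of_int \<lfloor>x$i / e + 1/2\<rfloor> + 1" by (rule real_of_int_floor_add_one_gt)
  show "\<bar>zc e (\<chi> i. real_of_int \<lfloor>x$i / e + 1/2\<rfloor>) x i\<bar> \<le> 1/2"
  proof -
    have c: "(\<chi> i. real_of_int \<lfloor>x$i / e + 1/2\<rfloor>) $ i = real_of_int \<lfloor>x$i / e + 1/2\<rfloor>" by simp
    show ?thesis unfolding zc_def c abs_le_iff using a b by linarith
  qed
qed

lemma near: assumes e: "e > 0" and xm: "\<forall>i. \<bar>zc e m x i\<bar> \<le> 1/2" and y: "\<forall>i. \<bar>zc e m y i\<bar> \<le> 1"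
  shows "dist y x \<le> 3 * e"
proof -
  have c: "\<bar>y$i - x$i\<bar> \<le> 3/2 * e" for i
  proof -
    have "y$i - x$i = e * (zc e m y i - zc e m x i)" unfolding zc_def using e by (simp add: field_simps)
    then have "\<bar>y$i - x$i\<bar> = e * \<bar>zc e m y i - zc e m x i\<bar>" using e by (simp add: abs_mult)
    also have "\<dots> \<le> e * (3/2)"
    proof (intro mult_left_mono)
      show "\<bar>zc e m y i - zc e m x i\<bar> \<le> 3/2" using xm[rule_format, of i] y[rule_format, of i] by linarith
    qed (use e in simp)
    finally show ?thesis by simp
  qed
  have "dist y x \<le> \<bar>(y - x)$1\<bar> + \<bar>(y - x)$2\<bar>"
    unfolding dist_norm using norm_le_l1_cart[of "y - x"] by (simp add: sum_2)
  also have "\<dots> \<le> 3/2 * e + 3/2 * e" using c[of 1] c[of 2] by simp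
  finally show ?thesis by simp
qed

theorem theorem1p4:
  fixes \<Lambda> :: real
  assumes "\<Lambda> > 1"
  shows "\<exists>a :: real^2 \<Rightarrow> real. \<exists>Fa > 0.
           smooth2 a \<and> periodic2 a \<and> (\<forall>x. 1 \<le> a x \<and> a x \<le> \<Lambda>) \<and>
           (\<forall>F u0 u. \<bar>F\<bar> < Fa \<and> uniformly_continuous_on UNIV u0 \<and>
              (\<forall>e>0. visc_solution a e F u0 (u e)) \<longrightarrow> loc_unif_conv u u0)"
proof -
  obtain d0 where d0: "d0 > 0" and dlow0: "\<forall>w. 9/8 \<le> Bs 1 1 w \<longrightarrow> Bs 1 1 w \<le> 11/8 \<longrightarrow> d0 \<le> norm (DBv w)"
    using d0_exists by blast
  have dlow: "\<And>w. 9/8 \<le> Bs 1 1 w \<Longrightarrow> Bs 1 1 w \<le> 11/8 \<Longrightarrow> d0 \<le> norm (DBv w)" using dlow0 by blast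
  define c where "c = (\<Lambda> - 1) / 4"
  have c: "c > 0" unfolding c_def using assms by simp
  define X where "X = 100 * (1 + 4*c) / d0^2 + 1 / d0"
  define K where "K = max 8 (81 * X / c)"
  have K: "K \<ge> 8" unfolding K_def by simp
  have Kc: "100 * (1 + 4*c) / d0^2 + 1 / d0 \<le> c * K / 81"
  proof -
    have "81 * X / c \<le> K" unfolding K_def by simp
    then have "81 * X \<le> c * K" using c by (simp add: field_simps)
    then show ?thesis unfolding X_def by simp
  qed
  have lam1: "1 + 4 * c = \<Lambda>" unfolding c_def by (simp add: field_simps)
  show ?thesis
  proof (intro exI[of _ "aa c K"] exI[of _ "1::real"] conjI allI impI)
    show "(0::real) < 1" by simp
    show "smooth2 (aa c K)" by (rule TT_smooth[OF aa_TT])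
    show "periodic2 (aa c K)" by (rule aa_periodic)
    fix x show "1 \<le> aa c K x" using aa_range[of c K x] c by simp
    show "aa c K x \<le> \<Lambda>" using aa_range[of c K x] c lam1 by simp
  next
    fix F u0 and u :: "real \<Rightarrow> real^2 \<Rightarrow> real \<Rightarrow> real"
    assume h: "\<bar>F\<bar> < 1 \<and> uniformly_continuous_on UNIV u0 \<and> (\<forall>e>0. visc_solution (aa c K) e F u0 (u e))"
    have F: "\<bar>F\<bar> < 1" using h by blast
    have uc: "uniformly_continuous_on UNIV u0" using h by blast
    have sol: "\<And>e. e > 0 \<Longrightarrow> visc_solution (aa c K) e F u0 (u e)" using h by blast
    show "loc_unif_conv u u0"
      unfolding loc_unif_conv_def
    proof (intro allI impI)
      fix Kset :: "((real^2) \<times> real) set" and \<delta> :: real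
      assume KS: "compact Kset \<and> Kset \<subseteq> UNIV \<times> {0..}" and \<delta>: "\<delta> > 0"
      obtain r where r: "r > 0" and ru: "\<And>x x'. dist x' x < r \<Longrightarrow> dist (u0 x') (u0 x) < \<delta>/2"
        using uc \<delta> unfolding uniformly_continuous_on_def by (metis UNIV_I half_gt_zero)
      show "\<exists>e0>0. \<forall>e. 0 < e \<and> e < e0 \<longrightarrow> (\<forall>z\<in>Kset. \<bar>u e (fst z) (snd z) - u0 (fst z)\<bar> < \<delta>)"
      proof (intro exI[of _ "r/3"] conjI allI impI ballI)
        show "0 < r/3" using r by simp
        fix e z assume e: "0 < e \<and> e < r/3" and zK: "z \<in> Kset"
        define x where "x = fst z"
        define t where "t = snd z"
        have t: "0 \<le> t" using KS zK unfolding t_def by auto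
        have e0: "e > 0" using e by simp
        obtain m where m: "\<forall>i. m$i \<in> \<int>" and xm: "\<forall>i. \<bar>zc e m x i\<bar> \<le> 1/2"
          using round_vec[OF e0] by blast
        have close: "\<bar>u0 y - u0 x\<bar> < \<delta>/2" if "\<forall>i. \<bar>zc e m y i\<bar> \<le> 1" for y
        proof -
          have "dist y x \<le> 3 * e" by (rule near[OF e0 xm that])
          also have "\<dots> < r" using e by simp
          finally show ?thesis using ru[of y x] by (simp add: dist_real_def)
        qed
        have vs: "visc_solution (aa c K) e F u0 (u e)" using sol e0 by simp
        have cu: "continuous_on (UNIV \<times> {0..}) (\<lambda>z. u e (fst z) (snd z))"
          and u00: "\<And>y. u e y 0 = u0 y" and sub: "visc_sub (aa c K) e F (u e)"
          and sup: "visc_super (aa c K) e F (u e)"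
          using vs unfolding visc_solution_def by auto
        have up: "u e x t \<le> u0 x + \<delta>/2"
        proof (rule upper[OF c K F d0 Kc dlow e0 cu sub m xm _ t])
          fix y assume a: "\<forall>i. \<bar>zc e m y i\<bar> \<le> 1"
          have hh: "\<bar>u0 y - u0 x\<bar> < \<delta>/2" by (rule close[OF a])
          show "u e y 0 \<le> u0 x + \<delta>/2" unfolding u00 using hh by arith
        qed
        have lo: "(\<lambda>y s. - u e y s) x t \<le> - u0 x + \<delta>/2"
        proof (rule upper[OF c K _ d0 Kc dlow e0 _ super_neg[OF sup] m xm _ t])
          show "\<bar>- F\<bar> < 1" using F by simp
          show "continuous_on (UNIV \<times> {0..}) (\<lambda>z. - u e (fst z) (snd z))"
            using cu by (intro continuous_on_minus)
          fix y assume a: "\<forall>i. \<bar>zc e m y i\<bar> \<le> 1"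
          have hh: "\<bar>u0 y - u0 x\<bar> < \<delta>/2" by (rule close[OF a])
          show "- u e y 0 \<le> - u0 x + \<delta>/2" unfolding u00 using hh by arith
        qed
        have "\<bar>u e x t - u0 x\<bar> \<le> \<delta>/2" using up lo by arith
        then show "\<bar>u e (fst z) (snd z) - u0 (fst z)\<bar> < \<delta>" using \<delta> unfolding x_def t_def by simp
      qed
    qed
  qed
qed


end
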